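(* For all $m>n\ge1$, the cost-SR calculus has a proof of $\mathrm{cost}(\mathrm{BPHP}^m_n)=m-n$ of size polynomial in $m$ and $n$.
   Context: $\mathrm{BPHP}^m_n$ is the CNF with variables $p_{i,j}$ ($i\in[m]$, $j\in[n]$) and blocking variables $b_i$ ($i\in[m]$) and $b_{i,k,j}$ ($1\le i<k\le m$, $j\in[n]$), consisting of the clauses $\bigvee_{j\in[n]}p_{i,j}\lor b_i$ for $i\in[m]$ and $\lnot p_{i,j}\lor\lnot p_{k,j}\lor b_{i,k,j}$ for $1\le i<k\le m$, $j\in[n]$. Notation: a substitution maps variables to $0$, $1$ or literals (with $\sigma(\lnot x)=\lnot\sigma(x)$); $(\sigma\circ\tau)(x)=\sigma(\tau(x))$; total assignments assign Boolean values to all variables. $C{\upharpoonright}_\sigma$: apply $\sigma$ to the literals and simplify; $\Gamma{\upharpoonright}_\sigma$ is the multiset of $C{\upharpoonright}_\sigma\ne1$, $C\in\Gamma$. $\lnot C$ is the partial assignment falsifying all literals of $C$. $\Gamma\vdash_1 C$ means unit propagation on $\Gamma{\upharpoonright}_{\lnot C}$ derives the empty clause; $\Gamma\vdash_1\Delta$ means this for all $D\in\Delta$. $\mathrm{cost}(\alpha)$ is the number of blocking variables set to $1$ by a total assignment $\alpha$; $\mathrm{cost}(\Gamma)=\min\{\mathrm{cost}(\alpha):\alpha\models\Gamma\}$. $C$ is cost-SR w.r.t. $\Gamma$ if there is a substitution $\sigma$ with (1) $\Gamma{\upharpoonright}_{\lnot C}\vdash_1(\Gamma\cup\{C\}){\upharpoonright}_\sigma$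 and (2) $\mathrm{cost}(\tau\circ\sigma)\le\mathrm{cost}(\tau)$ for all total $\tau\supseteq\lnot C$. A cost-SR calculus derivation from $\Gamma$: sequence $D_1,\dots,D_t$, each in $\Gamma$, or by weakening/resolution from earlier clauses, or cost-SR w.r.t. $\Gamma\cup\{D_1,\dots,D_{i-1}\}$ with $\mathrm{Var}(D_i)\subseteq\mathrm{Var}(\Gamma)$; its size is $t$. A proof of $\mathrm{cost}(\Gamma)=k$ is a derivation containing $k$ unit clauses $b$ for $k$ distinct blocking variables and the unit clauses $\lnot b'$ for all other blocking variables $b'$. *)

theory Defs
  imports Main
begin

datatype 'v lit = Pos 'v | Neg 'v

fun lit_var :: "'v lit \<Rightarrow> 'v" where
  "lit_var (Pos x) = x" | "lit_var (Neg x) = x"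

fun lit_neg :: "'v lit \<Rightarrow> 'v lit" where
  "lit_neg (Pos x) = Neg x" | "lit_neg (Neg x) = Pos x"

type_synonym 'v clause = "'v lit set"
type_synonym 'v cnf = "'v clause set"

text \<open>Image of a variable under a substitution: a constant (0/1) or a literal.\<close>
datatype 'v slit = Const bool | Lit "'v lit"

type_synonym 'v subst = "'v \<Rightarrow> 'v slit"

fun slit_neg :: "'v slit \<Rightarrow> 'v slit" where
  "slit_neg (Const b) = Const (\<not> b)" | "slit_neg (Lit l) = Lit (lit_neg l)"

fun subst_lit :: "'v subst \<Rightarrow> 'v lit \<Rightarrow> 'v slit" where
  "subst_lit \<sigma> (Pos x) = \<sigma> x" | "subst_lit \<sigma> (Neg x) = slit_neg (\<sigma> x)"

text \<open>Restriction of a clause: None means the clause became 1 (satisfied).\<close>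
definition clause_restrict :: "'v subst \<Rightarrow> 'v clause \<Rightarrow> 'v clause option" where
  "clause_restrict \<sigma> C =
     (if \<exists>l\<in>C. subst_lit \<sigma> l = Const True then None
      else Some {l'. \<exists>l\<in>C. subst_lit \<sigma> l = Lit l'})"

definition restrict :: "'v subst \<Rightarrow> 'v cnf \<Rightarrow> 'v cnf" where
  "restrict \<sigma> F = {D. \<exists>C\<in>F. clause_restrict \<sigma> C = Some D}"

definition vars :: "'v cnf \<Rightarrow> 'v set" where
  "vars F = {lit_var l | l C. C \<in> F \<and> l \<in> C}"

definition clause_vars :: "'v clause \<Rightarrow> 'v set" where
  "clause_vars C = lit_var ` C"

text \<open>The partial assignment falsifying all literals of C (identity elsewhere).\<close>
definition neg_clause :: "'v clause \<Rightarrow> 'v subst" where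
  "neg_clause C = (\<lambda>x. if Pos x \<in> C then Const False
                        else if Neg x \<in> C then Const True else Lit (Pos x))"

definition unit_subst :: "'v lit \<Rightarrow> 'v subst" where
  "unit_subst l = (\<lambda>x. if x = lit_var l then Const (\<exists>y. l = Pos y) else Lit (Pos x))"

inductive up_refutes :: "'v cnf \<Rightarrow> bool" where
  empty: "{} \<in> F \<Longrightarrow> up_refutes F"
| unit: "{l} \<in> F \<Longrightarrow> up_refutes (restrict (unit_subst l) F) \<Longrightarrow> up_refutes F"

text \<open>Gamma |-_1 C : unit propagation on Gamma restricted by not C derives the empty clause.\<close>
definition up_implies :: "'v cnf \<Rightarrow> 'v clause \<Rightarrow> bool" where
  "up_implies \<Gamma> C = up_refutes (restrict (neg_clause C) \<Gamma>)"

definition up_implies_all :: "'v cnf \<Rightarrow> 'v cnf \<Rightarrow> bool" where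
  "up_implies_all \<Gamma> \<Delta> = (\<forall>D\<in>\<Delta>. up_implies \<Gamma> D)"

type_synonym 'v assignment = "'v \<Rightarrow> bool"

fun eval_lit :: "'v assignment \<Rightarrow> 'v lit \<Rightarrow> bool" where
  "eval_lit \<tau> (Pos x) = \<tau> x" | "eval_lit \<tau> (Neg x) = (\<not> \<tau> x)"

definition comp_subst :: "'v assignment \<Rightarrow> 'v subst \<Rightarrow> 'v assignment" where
  "comp_subst \<tau> \<sigma> = (\<lambda>x. case \<sigma> x of Const b \<Rightarrow> b | Lit l \<Rightarrow> eval_lit \<tau> l)"

definition cost :: "'v set \<Rightarrow> 'v assignment \<Rightarrow> nat" where
  "cost BV \<alpha> = card {b\<in>BV. \<alpha> b}"

definition extends_neg :: "'v assignment \<Rightarrow> 'v clause \<Rightarrow> bool" where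
  "extends_neg \<tau> C = (\<forall>l\<in>C. \<not> eval_lit \<tau> l)"

definition cost_SR :: "'v set \<Rightarrow> 'v cnf \<Rightarrow> 'v clause \<Rightarrow> bool" where
  "cost_SR BV \<Gamma> C = (\<exists>\<sigma>.
      up_implies_all (restrict (neg_clause C) \<Gamma>) (restrict \<sigma> (\<Gamma> \<union> {C})) \<and>
      (\<forall>\<tau>. extends_neg \<tau> C \<longrightarrow> cost BV (comp_subst \<tau> \<sigma>) \<le> cost BV \<tau>))"

definition valid_step :: "'v set \<Rightarrow> 'v cnf \<Rightarrow> 'v clause list \<Rightarrow> 'v clause \<Rightarrow> bool" where
  "valid_step BV \<Gamma> prev D =
     (D \<in> \<Gamma>
      \<or> (\<exists>C\<in>set prev. C \<subseteq> D)
      \<or> (\<exists>C1\<in>set prev. \<exists>C2\<in>set prev. \<exists>x. Pos x \<in> C1 \<and> Neg x \<in> C2 \<and>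
            D = (C1 - {Pos x}) \<union> (C2 - {Neg x}))
      \<or> (cost_SR BV (\<Gamma> \<union> set prev) D \<and> clause_vars D \<subseteq> vars \<Gamma>))"

definition derivation :: "'v set \<Rightarrow> 'v cnf \<Rightarrow> 'v clause list \<Rightarrow> bool" where
  "derivation BV \<Gamma> Ds = (\<forall>i<length Ds. valid_step BV \<Gamma> (take i Ds) (Ds ! i))"

text \<open>A proof of cost(Gamma) = k.\<close>
definition cost_proof :: "'v set \<Rightarrow> 'v cnf \<Rightarrow> nat \<Rightarrow> 'v clause list \<Rightarrow> bool" where
  "cost_proof BV \<Gamma> k Ds = (derivation BV \<Gamma> Ds \<and>
     (\<exists>K\<subseteq>BV. card K = k \<and> (\<forall>b\<in>K. {Pos b} \<in> set Ds) \<and>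
                         (\<forall>b\<in>BV - K. {Neg b} \<in> set Ds)))"

datatype bvar = p nat nat | b1 nat | b3 nat nat nat

definition BPHP_blocks :: "nat \<Rightarrow> nat \<Rightarrow> bvar set" where
  "BPHP_blocks m n = {b1 i | i. i \<in> {1..m}}
     \<union> {b3 i k j | i k j. 1 \<le> i \<and> i < k \<and> k \<le> m \<and> j \<in> {1..n}}"

definition BPHP :: "nat \<Rightarrow> nat \<Rightarrow> bvar cnf" where
  "BPHP m n =
     {insert (Pos (b1 i)) {Pos (p i j) | j. j \<in> {1..n}} | i. i \<in> {1..m}}
   \<union> {{Neg (p i j), Neg (p k j), Pos (b3 i k j)} | i k j.
        1 \<le> i \<and> i < k \<and> k \<le> m \<and> j \<in> {1..n}}"

end

theory Submission
  imports Defs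
begin

definition img :: "'v subst \<Rightarrow> 'v clause \<Rightarrow> 'v clause" where
  "img \<sigma> E = {l'. \<exists>l\<in>E. subst_lit \<sigma> l = Lit l'}"

definition consistent :: "'v clause \<Rightarrow> bool" where
  "consistent D = (\<forall>l\<in>D. lit_neg l \<notin> D)"

lemma lit_neg_neg[simp]: "lit_neg (lit_neg l) = l"
  by (cases l) auto

lemma cSR_intro:
  assumes "\<And>E. E \<in> \<Gamma>' \<union> {C} \<Longrightarrow> (\<exists>l\<in>E. subst_lit \<sigma> l = Const True) \<or>
              up_implies (restrict (neg_clause C) \<Gamma>') (img \<sigma> E)"
    and "\<And>\<tau>. extends_neg \<tau> C \<Longrightarrow> cost BV (comp_subst \<tau> \<sigma>) \<le> cost BV \<tau>"
  shows "cost_SR BV \<Gamma>' C"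
  unfolding cost_SR_def
proof (intro exI conjI)
  show "up_implies_all (restrict (neg_clause C) \<Gamma>') (restrict \<sigma> (\<Gamma>' \<union> {C}))"
    unfolding up_implies_all_def
  proof
    fix D assume "D \<in> restrict \<sigma> (\<Gamma>' \<union> {C})"
    then obtain E where E: "E \<in> \<Gamma>' \<union> {C}" "clause_restrict \<sigma> E = Some D"
      unfolding restrict_def by blast
    then have "\<not> (\<exists>l\<in>E. subst_lit \<sigma> l = Const True)" and "D = img \<sigma> E"
      unfolding clause_restrict_def img_def by (auto split: if_splits)
    with assms(1)[OF E(1)] show "up_implies (restrict (neg_clause C) \<Gamma>') D" by blast
  qed
qed (use assms(2) in blast)

lemma nc_unit: "subst_lit (neg_clause {c}) l =
   (if l = c then Const False else if l = lit_neg c then Const True else Lit l)"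
  by (cases l; cases c) (auto simp: neg_clause_def)

lemma nc_false: "l \<in> D \<Longrightarrow> lit_neg l \<notin> D \<Longrightarrow> subst_lit (neg_clause D) l = Const False"
  by (cases l) (auto simp: neg_clause_def)

lemma nc_lit: "l \<notin> D \<Longrightarrow> lit_neg l \<notin> D \<Longrightarrow> subst_lit (neg_clause D) l = Lit l"
  by (cases l) (auto simp: neg_clause_def)

lemma restrict_unit_in:
  assumes "E \<in> \<Gamma>'" "lit_neg c \<notin> E"
  shows "E - {c} \<in> restrict (neg_clause {c}) \<Gamma>'"
proof -
  have "clause_restrict (neg_clause {c}) E = Some (E - {c})"
    using assms(2) unfolding clause_restrict_def by (auto simp: nc_unit) (metis)
  then show ?thesis using assms(1) unfolding restrict_def by blast
qed

lemma W1:
  assumes "E' \<in> \<Gamma>'" "lit_neg c \<notin> E'" "E' - {c} \<subseteq> D" "consistent D"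
  shows "up_implies (restrict (neg_clause {c}) \<Gamma>') D"
proof -
  let ?G = "restrict (neg_clause {c}) \<Gamma>'"
  have in1: "E' - {c} \<in> ?G" using restrict_unit_in assms by blast
  have "clause_restrict (neg_clause D) (E' - {c}) = Some {}"
    using assms(3,4) unfolding clause_restrict_def consistent_def
    by (auto simp: nc_false)
  then have "{} \<in> restrict (neg_clause D) ?G"
    using in1 unfolding restrict_def by blast
  then show ?thesis unfolding up_implies_def by (rule up_refutes.empty)
qed

lemma compl_units:
  assumes "{a} \<in> F" "{lit_neg a} \<in> F"
  shows "up_refutes F"
proof (rule up_refutes.unit[OF assms(1)])
  have "clause_restrict (unit_subst a) {lit_neg a} = Some {}"
    by (cases a) (auto simp: clause_restrict_def unit_subst_def)
  then show "up_refutes (restrict (unit_subst a) F)"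
    using assms(2) by (intro up_refutes.empty) (auto simp: restrict_def)
qed

lemma W2:
  assumes "Ea \<in> \<Gamma>'" "Eb \<in> \<Gamma>'" "lit_neg c \<notin> Ea" "lit_neg c \<notin> Eb"
    "a \<in> Ea" "a \<noteq> c" "Ea - {c, a} \<subseteq> D" "Eb - {c} = {lit_neg a}"
    "a \<notin> D" "lit_neg a \<notin> D" "consistent D"
  shows "up_implies (restrict (neg_clause {c}) \<Gamma>') D"
proof -
  let ?G = "restrict (neg_clause {c}) \<Gamma>'"
  have i1: "Ea - {c} \<in> ?G" and i2: "{lit_neg a} \<in> ?G"
    using restrict_unit_in assms by metis+
  have v: "\<forall>l\<in>Ea - {c}. subst_lit (neg_clause D) l = (if l = a then Lit a else Const False)"
  proof
    fix l assume l: "l \<in> Ea - {c}"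
    show "subst_lit (neg_clause D) l = (if l = a then Lit a else Const False)"
    proof (cases "l = a")
      case True then show ?thesis using assms(9,10) nc_lit by simp
    next
      case False
      then have "l \<in> D" using l assms(7) by blast
      then show ?thesis using False assms(11) unfolding consistent_def by (simp add: nc_false)
    qed
  qed
  have ain: "a \<in> Ea - {c}" using assms(5,6) by blast
  have "clause_restrict (neg_clause D) (Ea - {c}) = Some {a}"
    unfolding clause_restrict_def
  proof -
    have "\<not> (\<exists>l\<in>Ea - {c}. subst_lit (neg_clause D) l = Const True)"
      using v by (metis slit.distinct(1) slit.inject(1))
    moreover have "{l'. \<exists>l\<in>Ea - {c}. subst_lit (neg_clause D) l = Lit l'} = {a}"
      using v ain by (auto split: if_splits)
    ultimately show "(if \<exists>l\<in>Ea - {c}. subst_lit (neg_clause D) l = Const True then None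
      else Some {l'. \<exists>l\<in>Ea - {c}. subst_lit (neg_clause D) l = Lit l'}) = Some {a}" by simp
  qed
  then have 1: "{a} \<in> restrict (neg_clause D) ?G" using i1 unfolding restrict_def by blast
  have "clause_restrict (neg_clause D) {lit_neg a} = Some {lit_neg a}"
    using assms(9,10) unfolding clause_restrict_def by (auto simp: nc_lit)
  then have 2: "{lit_neg a} \<in> restrict (neg_clause D) ?G" using i2 unfolding restrict_def by blast
  show ?thesis unfolding up_implies_def using compl_units[OF 1 2] .
qed

definition pinj :: "'v subst \<Rightarrow> bool" where
  "pinj \<sigma> = ((\<forall>x. (\<exists>b. \<sigma> x = Const b) \<or> (\<exists>y. \<sigma> x = Lit (Pos y))) \<and>
     (\<forall>x x' y. \<sigma> x = Lit (Pos y) \<longrightarrow> \<sigma> x' = Lit (Pos y) \<longrightarrow> x = x'))"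

definition tfree :: "'v clause \<Rightarrow> bool" where
  "tfree E = (\<forall>x. \<not> (Pos x \<in> E \<and> Neg x \<in> E))"

lemma subst_lit_Lit:
  assumes "pinj \<sigma>" "subst_lit \<sigma> l = Lit l'"
  shows "(\<exists>x y. l = Pos x \<and> l' = Pos y \<and> \<sigma> x = Lit (Pos y)) \<or>
         (\<exists>x y. l = Neg x \<and> l' = Neg y \<and> \<sigma> x = Lit (Pos y))"
proof (cases l)
  case (Pos x)
  have "(\<exists>b. \<sigma> x = Const b) \<or> (\<exists>y. \<sigma> x = Lit (Pos y))" using assms(1) unfolding pinj_def by blast
  then show ?thesis using assms(2) Pos by auto
next
  case (Neg x)
  have "(\<exists>b. \<sigma> x = Const b) \<or> (\<exists>y. \<sigma> x = Lit (Pos y))" using assms(1) unfolding pinj_def by blast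
  then show ?thesis using assms(2) Neg by auto
qed

lemma img_consistent:
  assumes "pinj \<sigma>" "tfree E"
  shows "consistent (img \<sigma> E)"
  unfolding consistent_def
proof (intro ballI notI)
  fix l assume l1: "l \<in> img \<sigma> E" and l2: "lit_neg l \<in> img \<sigma> E"
  from l1 obtain l0 where a: "l0 \<in> E" "subst_lit \<sigma> l0 = Lit l" unfolding img_def by blast
  from l2 obtain l1 where b: "l1 \<in> E" "subst_lit \<sigma> l1 = Lit (lit_neg l)" unfolding img_def by blast
  from subst_lit_Lit[OF assms(1) a(2)] subst_lit_Lit[OF assms(1) b(2)]
  obtain x x' y where xx: "Pos x \<in> E" "Neg x' \<in> E" "\<sigma> x = Lit (Pos y)" "\<sigma> x' = Lit (Pos y)"
    using a(1) b(1) by (cases l) auto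
  then have "x = x'" using assms(1) unfolding pinj_def by blast
  then show False using xx assms(2) unfolding tfree_def by blast
qed

definition good :: "'v subst \<Rightarrow> 'v lit \<Rightarrow> 'v cnf \<Rightarrow> 'v clause \<Rightarrow> bool" where
  "good \<sigma> c \<Gamma>' E = ((\<exists>l\<in>E. subst_lit \<sigma> l = Const True) \<or>
      up_implies (restrict (neg_clause {c}) \<Gamma>') (img \<sigma> E))"

lemma good_true: "l \<in> E \<Longrightarrow> subst_lit \<sigma> l = Const True \<Longrightarrow> good \<sigma> c \<Gamma>' E"
  unfolding good_def by blast

lemma good_W1:
  assumes "E' \<in> \<Gamma>'" "lit_neg c \<notin> E'" "E' - {c} \<subseteq> img \<sigma> E" "pinj \<sigma>" "tfree E"
  shows "good \<sigma> c \<Gamma>' E"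
  unfolding good_def using W1[OF assms(1,2,3) img_consistent[OF assms(4,5)]] by blast

lemma good_W2:
  assumes "Ea \<in> \<Gamma>'" "Eb \<in> \<Gamma>'" "lit_neg c \<notin> Ea" "lit_neg c \<notin> Eb"
    "a \<in> Ea" "a \<noteq> c" "Ea - {c, a} \<subseteq> img \<sigma> E" "Eb - {c} = {lit_neg a}"
    "a \<notin> img \<sigma> E" "lit_neg a \<notin> img \<sigma> E" "pinj \<sigma>" "tfree E"
  shows "good \<sigma> c \<Gamma>' E"
  unfolding good_def using W2[OF assms(1-10) img_consistent[OF assms(11,12)]] by blast

lemma img_id:
  assumes "\<forall>l\<in>E. \<sigma> (lit_var l) = Lit (Pos (lit_var l))"
  shows "img \<sigma> E = E"
proof -
  have "\<forall>l\<in>E. subst_lit \<sigma> l = Lit l"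
  proof
    fix l assume "l \<in> E" then show "subst_lit \<sigma> l = Lit l" using assms by (cases l) auto
  qed
  then show ?thesis unfolding img_def by auto
qed

lemma good_id:
  assumes "E \<in> \<Gamma>'" "lit_neg c \<notin> E" "pinj \<sigma>" "tfree E"
    "\<forall>l\<in>E. \<sigma> (lit_var l) = Lit (Pos (lit_var l))"
  shows "good \<sigma> c \<Gamma>' E"
  by (rule good_W1[OF assms(1,2) _ assms(3,4)]) (use img_id[OF assms(5)] in blast)

lemma img_Pos: "Pos x \<in> E \<Longrightarrow> \<sigma> x = Lit (Pos y) \<Longrightarrow> Pos y \<in> img \<sigma> E"
  unfolding img_def by force

lemma img_Neg: "Neg x \<in> E \<Longrightarrow> \<sigma> x = Lit (Pos y) \<Longrightarrow> Neg y \<in> img \<sigma> E"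
  unfolding img_def by force

lemma cSR_good:
  assumes "\<And>E. E \<in> \<Gamma>' \<union> {{c}} \<Longrightarrow> good \<sigma> c \<Gamma>' E"
    and "\<And>\<tau>. extends_neg \<tau> {c} \<Longrightarrow> cost BV (comp_subst \<tau> \<sigma>) \<le> cost BV \<tau>"
  shows "cost_SR BV \<Gamma>' {c}"
  by (rule cSR_intro) (use assms in \<open>auto simp: good_def\<close>)

definition PCl :: "nat \<Rightarrow> nat \<Rightarrow> bvar clause" where
  "PCl n i = insert (Pos (b1 i)) {Pos (p i j) | j. j \<in> {1..n}}"
definition HCl :: "nat \<Rightarrow> nat \<Rightarrow> nat \<Rightarrow> bvar clause" where
  "HCl i k j = {Neg (p i j), Neg (p k j), Pos (b3 i k j)}"
definition BCl :: "nat \<Rightarrow> nat \<Rightarrow> nat \<Rightarrow> bvar clause" where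
  "BCl i k j = {Neg (p i j), Neg (p k j)}"

abbreviation "N3 i k j \<equiv> {Neg (b3 i k j)}"
abbreviation "NP x h \<equiv> {Neg (p x h)}"
abbreviation "PU x \<equiv> {Pos (p x x)}"
abbreviation "NB x \<equiv> {Neg (b1 x)}"

definition valid3 :: "nat \<Rightarrow> nat \<Rightarrow> nat \<Rightarrow> nat \<Rightarrow> nat \<Rightarrow> bool" where
  "valid3 m n i k j = (1 \<le> i \<and> i < k \<and> k \<le> m \<and> 1 \<le> j \<and> j \<le> n)"

lemma BPHP_alt: "BPHP m n = {PCl n i | i. 1 \<le> i \<and> i \<le> m} \<union> {HCl i k j | i k j. valid3 m n i k j}"
  unfolding BPHP_def PCl_def HCl_def valid3_def by auto

lemma finite_BV: "finite (BPHP_blocks m n)"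
proof -
  have "BPHP_blocks m n \<subseteq> b1 ` {..m} \<union> (\<lambda>(i,k,j). b3 i k j) ` ({..m} \<times> {..m} \<times> {..n})"
    unfolding BPHP_blocks_def by (fastforce simp: image_iff)
  then show ?thesis by (rule finite_subset) auto
qed

lemma tfree_PCl: "tfree (PCl n i)" unfolding tfree_def PCl_def by auto
lemma tfree_HCl: "tfree (HCl i k j)" unfolding tfree_def HCl_def by auto
lemma tfree_BCl: "tfree (BCl i k j)" unfolding tfree_def BCl_def by auto
lemma tfree_unit: "tfree {l}" unfolding tfree_def by (cases l) auto

definition \<sigma>1 :: "nat \<Rightarrow> nat \<Rightarrow> nat \<Rightarrow> bvar subst" where
  "\<sigma>1 i k j v = (if v = b3 i k j then Const False else if v = b1 k then Const True
     else if v = p k j then Const False else Lit (Pos v))"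

lemma pinj_\<sigma>1: "pinj (\<sigma>1 i k j)" unfolding pinj_def \<sigma>1_def by auto

lemma cost_le_insert:
  assumes fin: "finite BV" and sub: "{b\<in>BV. \<alpha> b} \<subseteq> insert b' ({b\<in>BV. \<tau> b} - {bz})"
    and bz: "bz \<in> BV" "\<tau> bz"
  shows "cost BV \<alpha> \<le> cost BV \<tau>"
proof -
  let ?S = "{b\<in>BV. \<tau> b}"
  have fS: "finite ?S" using fin by simp
  have "cost BV \<alpha> \<le> card (insert b' (?S - {bz}))"
    unfolding cost_def by (rule card_mono) (use fS sub in auto)
  also have "\<dots> \<le> Suc (card (?S - {bz}))" by (simp add: card_insert_le_m1 card_insert_if)
  also have "\<dots> = card ?S" by (rule card_Suc_Diff1) (use bz fS in auto)
  finally show ?thesis unfolding cost_def .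
qed

lemma cost_le_pointwise:
  assumes "finite BV" "\<And>b. b \<in> BV \<Longrightarrow> \<alpha> b \<Longrightarrow> \<tau> b"
  shows "cost BV \<alpha> \<le> cost BV \<tau>"
  unfolding cost_def by (rule card_mono) (use assms in auto)

lemma fix_PCl: "(\<And>j. 1 \<le> j \<Longrightarrow> j \<le> n \<Longrightarrow> \<sigma> (p x j) = Lit (Pos (p x j))) \<Longrightarrow>
   \<sigma> (b1 x) = Lit (Pos (b1 x)) \<Longrightarrow> \<forall>l\<in>PCl n x. \<sigma> (lit_var l) = Lit (Pos (lit_var l))"
  unfolding PCl_def by auto
lemma fix_HCl: "\<sigma> (p x h) = Lit (Pos (p x h)) \<Longrightarrow> \<sigma> (p y h) = Lit (Pos (p y h)) \<Longrightarrow>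
   \<sigma> (b3 x y h) = Lit (Pos (b3 x y h)) \<Longrightarrow> \<forall>l\<in>HCl x y h. \<sigma> (lit_var l) = Lit (Pos (lit_var l))"
  unfolding HCl_def by auto
lemma fix_BCl: "\<sigma> (p x h) = Lit (Pos (p x h)) \<Longrightarrow> \<sigma> (p y h) = Lit (Pos (p y h)) \<Longrightarrow>
   \<forall>l\<in>BCl x y h. \<sigma> (lit_var l) = Lit (Pos (lit_var l))"
  unfolding BCl_def by auto
lemma fix_unit: "\<sigma> (lit_var l) = Lit (Pos (lit_var l)) \<Longrightarrow> \<forall>l'\<in>{l}. \<sigma> (lit_var l') = Lit (Pos (lit_var l'))"
  by auto

lemma PCl_in: "1 \<le> x \<Longrightarrow> x \<le> m \<Longrightarrow> PCl n x \<in> BPHP m n"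
  unfolding BPHP_alt by blast
lemma HCl_in: "valid3 m n x y h \<Longrightarrow> HCl x y h \<in> BPHP m n"
  unfolding BPHP_alt by blast

lemma cases1: "E \<in> BPHP m n \<union> P \<union> {{c}} \<Longrightarrow> P \<subseteq> {N3 x y h | x y h. valid3 m n x y h} \<Longrightarrow>
 E = {c} \<or> (\<exists>x. E = PCl n x \<and> 1 \<le> x \<and> x \<le> m) \<or> (\<exists>x y h. E = HCl x y h \<and> valid3 m n x y h)
 \<or> (\<exists>x y h. E = N3 x y h \<and> valid3 m n x y h \<and> E \<in> P)"
proof -
  assume E: "E \<in> BPHP m n \<union> P \<union> {{c}}" and prev: "P \<subseteq> {N3 x y h | x y h. valid3 m n x y h}"
  consider "E = {c}" | "E \<in> BPHP m n" | "E \<in> P" using E by blast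
  then show ?thesis
  proof cases
    case 2
    then have "E \<in> {PCl n i | i. 1 \<le> i \<and> i \<le> m} \<or> E \<in> {HCl i k j | i k j. valid3 m n i k j}"
      unfolding BPHP_alt by blast
    then show ?thesis by blast
  next
    case 3
    then have "E \<in> {N3 x y h | x y h. valid3 m n x y h}" using prev by blast
    then show ?thesis using 3 by blast
  qed simp
qed

lemma g1_PC:
  assumes "1 \<le> x" "x \<le> m"
  shows "good (\<sigma>1 i k j) (Neg (b3 i k j)) (BPHP m n \<union> P) (PCl n x)"
proof (cases "x = k")
  case True then show ?thesis by (intro good_true[of "Pos (b1 k)"]) (auto simp: \<sigma>1_def PCl_def)
next
  case False
  have "PCl n x \<in> BPHP m n \<union> P" using PCl_in assms by blast
  moreover have "Pos (b3 i k j) \<notin> PCl n x" unfolding PCl_def by auto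
  moreover have "\<forall>l\<in>PCl n x. \<sigma>1 i k j (lit_var l) = Lit (Pos (lit_var l))"
    by (rule fix_PCl) (use False in \<open>auto simp: \<sigma>1_def\<close>)
  ultimately show ?thesis using pinj_\<sigma>1 tfree_PCl by (intro good_id) auto
qed

lemma g1_HC:
  assumes "valid3 m n x y h"
  shows "good (\<sigma>1 i k j) (Neg (b3 i k j)) (BPHP m n \<union> P) (HCl x y h)"
proof (cases "h = j \<and> (x = k \<or> y = k)")
  case True then show ?thesis by (intro good_true[of "Neg (p k j)"]) (auto simp: \<sigma>1_def HCl_def)
next
  case False
  have "HCl x y h \<in> BPHP m n \<union> P" using HCl_in assms by blast
  moreover have "Pos (b3 i k j) \<notin> HCl x y h" unfolding HCl_def using False by auto
  moreover have "\<forall>l\<in>HCl x y h. \<sigma>1 i k j (lit_var l) = Lit (Pos (lit_var l))"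
    by (rule fix_HCl) (use False in \<open>auto simp: \<sigma>1_def\<close>)
  ultimately show ?thesis using pinj_\<sigma>1 tfree_HCl by (intro good_id) auto
qed

lemma g1_N3:
  assumes "N3 x y h \<in> P"
  shows "good (\<sigma>1 i k j) (Neg (b3 i k j)) (BPHP m n \<union> P) (N3 x y h)"
proof (cases "x = i \<and> y = k \<and> h = j")
  case True then show ?thesis by (intro good_true[of "Neg (b3 i k j)"]) (auto simp: \<sigma>1_def)
next
  case False
  have "\<forall>l\<in>N3 x y h. \<sigma>1 i k j (lit_var l) = Lit (Pos (lit_var l))"
    by (rule fix_unit) (use False in \<open>auto simp: \<sigma>1_def\<close>)
  then show ?thesis using assms pinj_\<sigma>1 tfree_unit by (intro good_id) auto
qed

lemma step1:
  assumes v: "valid3 m n i k j"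
    and prev: "P \<subseteq> {N3 x y h | x y h. valid3 m n x y h}"
  shows "cost_SR (BPHP_blocks m n) (BPHP m n \<union> P) (N3 i k j)"
proof (rule cSR_good)
  fix E assume E: "E \<in> BPHP m n \<union> P \<union> {N3 i k j}"
  from cases1[OF E prev] show "good (\<sigma>1 i k j) (Neg (b3 i k j)) (BPHP m n \<union> P) E"
  proof (elim disjE exE conjE)
    assume "E = N3 i k j" then show ?thesis by (intro good_true[of "Neg (b3 i k j)"]) (auto simp: \<sigma>1_def)
  qed (simp_all add: g1_PC g1_HC g1_N3)
next
  fix \<tau> assume "extends_neg \<tau> {Neg (b3 i k j)}"
  then have t: "\<tau> (b3 i k j)" unfolding extends_neg_def by simp
  show "cost (BPHP_blocks m n) (comp_subst \<tau> (\<sigma>1 i k j)) \<le> cost (BPHP_blocks m n) \<tau>"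
  proof (rule cost_le_insert[where bz="b3 i k j"])
    show "finite (BPHP_blocks m n)" by (rule finite_BV)
    show "\<tau> (b3 i k j)" by (rule t)
    show "b3 i k j \<in> BPHP_blocks m n" using v unfolding BPHP_blocks_def valid3_def by auto
    show "{b \<in> BPHP_blocks m n. comp_subst \<tau> (\<sigma>1 i k j) b}
          \<subseteq> insert (b1 k) ({b \<in> BPHP_blocks m n. \<tau> b} - {b3 i k j})"
    proof (intro subsetI)
      fix b assume b: "b \<in> {b \<in> BPHP_blocks m n. comp_subst \<tau> (\<sigma>1 i k j) b}"
      show "b \<in> insert (b1 k) ({b \<in> BPHP_blocks m n. \<tau> b} - {b3 i k j})"
      proof (cases "b = b3 i k j \<or> b = b1 k \<or> b = p k j")
        case True then show ?thesis using b by (auto simp: comp_subst_def \<sigma>1_def)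
      next
        case False
        then have "\<sigma>1 i k j b = Lit (Pos b)" by (auto simp: \<sigma>1_def)
        then show ?thesis using b False by (simp add: comp_subst_def)
      qed
    qed
  qed
qed

definition sw :: "nat \<Rightarrow> nat \<Rightarrow> nat \<Rightarrow> nat" where
  "sw j k x = (if x = j then k else if x = k then j else x)"

lemma sw_inj: "sw j k x = sw j k y \<Longrightarrow> x = y"
  unfolding sw_def by (auto split: if_splits)

lemma sw_range: "1 \<le> j \<Longrightarrow> j \<le> m \<Longrightarrow> 1 \<le> k \<Longrightarrow> k \<le> m \<Longrightarrow> 1 \<le> x \<Longrightarrow> x \<le> m \<Longrightarrow>
   1 \<le> sw j k x \<and> sw j k x \<le> m"
  unfolding sw_def by auto

definition \<sigma>S :: "nat \<Rightarrow> nat \<Rightarrow> bvar subst" where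
  "\<sigma>S j k v = (case v of
      p x h \<Rightarrow> if x = k \<and> h = j then Const False else if x = j \<and> h = j then Const True
               else Lit (Pos (p (sw j k x) h))
    | b1 x \<Rightarrow> Lit (Pos (b1 (sw j k x)))
    | b3 a b c \<Rightarrow> Const False)"

lemma \<sigma>S_p: "\<not> (x = k \<and> h = j) \<Longrightarrow> \<not> (x = j \<and> h = j) \<Longrightarrow> \<sigma>S j k (p x h) = Lit (Pos (p (sw j k x) h))"
  unfolding \<sigma>S_def by auto

lemma pinj_\<sigma>S: "pinj (\<sigma>S j k)"
  unfolding pinj_def
proof (intro conjI allI impI)
  fix x show "(\<exists>b. \<sigma>S j k x = Const b) \<or> (\<exists>y. \<sigma>S j k x = Lit (Pos y))"
    unfolding \<sigma>S_def by (cases x) auto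
next
  fix x x' y assume a: "\<sigma>S j k x = Lit (Pos y)" "\<sigma>S j k x' = Lit (Pos y)"
  then show "x = x'"
    unfolding \<sigma>S_def by (cases x; cases x') (auto split: if_splits dest: sw_inj)
qed

lemma BC_sym_in:
  assumes "\<forall>x y h. valid3 m n x y h \<longrightarrow> BCl x y h \<in> P"
    "a \<noteq> b" "1 \<le> a" "a \<le> m" "1 \<le> b" "b \<le> m" "1 \<le> h" "h \<le> n"
  shows "{Neg (p a h), Neg (p b h)} \<in> P"
proof (cases "a < b")
  case True then show ?thesis using assms unfolding valid3_def BCl_def by auto
next
  case False
  then have "valid3 m n b a h" using assms unfolding valid3_def by auto
  then have "BCl b a h \<in> P" using assms(1) by blast
  then show ?thesis unfolding BCl_def by (simp add: insert_commute)
qed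

lemma img_\<sigma>S_PC:
  assumes "j \<noteq> k"
  shows "img (\<sigma>S j k) (PCl n k) = insert (Pos (b1 j)) {Pos (p j h) | h. h \<in> {1..n} \<and> h \<noteq> j}"
proof
  show "img (\<sigma>S j k) (PCl n k) \<subseteq> insert (Pos (b1 j)) {Pos (p j h) | h. h \<in> {1..n} \<and> h \<noteq> j}"
    unfolding img_def PCl_def using assms by (auto simp: \<sigma>S_def sw_def split: if_splits)
next
  show "insert (Pos (b1 j)) {Pos (p j h) | h. h \<in> {1..n} \<and> h \<noteq> j} \<subseteq> img (\<sigma>S j k) (PCl n k)"
  proof
    fix l assume "l \<in> insert (Pos (b1 j)) {Pos (p j h) | h. h \<in> {1..n} \<and> h \<noteq> j}"
    then consider "l = Pos (b1 j)" | h where "l = Pos (p j h)" "h \<in> {1..n}" "h \<noteq> j" by blast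
    then show "l \<in> img (\<sigma>S j k) (PCl n k)"
    proof cases
      case 1
      have "\<sigma>S j k (b1 k) = Lit (Pos (b1 j))" unfolding \<sigma>S_def sw_def by simp
      then show ?thesis using 1 img_Pos[of "b1 k" "PCl n k" "\<sigma>S j k" "b1 j"] by (auto simp: PCl_def)
    next
      case (2 h)
      have "\<sigma>S j k (p k h) = Lit (Pos (p j h))" using 2 assms by (subst \<sigma>S_p) (auto simp: sw_def)
      then show ?thesis using 2 img_Pos[of "p k h" "PCl n k" "\<sigma>S j k" "p j h"] by (auto simp: PCl_def)
    qed
  qed
qed

definition UpS :: "nat \<Rightarrow> nat \<Rightarrow> nat \<Rightarrow> bvar cnf" where
  "UpS m n j = {N3 x y h | x y h. valid3 m n x y h} \<union> {HCl x y h | x y h. valid3 m n x y h}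
     \<union> {BCl x y h | x y h. valid3 m n x y h} \<union> {NP k' j' | k' j'. 1 \<le> j' \<and> j' \<le> j \<and> j' < k' \<and> k' \<le> m}"

context
  fixes m n j k :: nat and P :: "bvar cnf"
  assumes jk: "1 \<le> j" "j \<le> n" "j < k" "k \<le> m"
    and lowB: "\<forall>x y h. valid3 m n x y h \<longrightarrow> BCl x y h \<in> P"
    and lowU: "\<forall>k' j'. 1 \<le> j' \<and> j' < j \<and> j' < k' \<and> k' \<le> m \<longrightarrow> NP k' j' \<in> P"
begin

abbreviation "GS \<equiv> BPHP m n \<union> P"

lemma swr: "1 \<le> x \<Longrightarrow> x \<le> m \<Longrightarrow> 1 \<le> sw j k x \<and> sw j k x \<le> m"
  using jk unfolding sw_def by auto

lemma gS_PC:
  assumes x: "1 \<le> x" "x \<le> m"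
  shows "good (\<sigma>S j k) (Neg (p k j)) GS (PCl n x)"
proof -
  consider "x = j" | "x = k" | "x \<noteq> j" "x \<noteq> k" by blast
  then show ?thesis
  proof cases
    case 1
    have "\<sigma>S j k (p j j) = Const True" using jk unfolding \<sigma>S_def by simp
    then show ?thesis using 1 jk by (intro good_true[of "Pos (p j j)"]) (auto simp: PCl_def)
  next
    case 2
    have jm: "j \<noteq> k" using jk by simp
    show ?thesis
    proof (rule good_W2[where Ea="PCl n j" and Eb="BCl j k j" and a="Pos (p j j)"])
      show "PCl n j \<in> GS" using PCl_in jk by auto
      show "BCl j k j \<in> GS" using lowB jk unfolding valid3_def by auto
      show "lit_neg (Neg (p k j)) \<notin> PCl n j" using jm unfolding PCl_def by auto
      show "lit_neg (Neg (p k j)) \<notin> BCl j k j" unfolding BCl_def by auto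
      show "Pos (p j j) \<in> PCl n j" using jk unfolding PCl_def by auto
      show "Pos (p j j) \<noteq> Neg (p k j)" by simp
      have e: "img (\<sigma>S j k) (PCl n x) = insert (Pos (b1 j)) {Pos (p j h) | h. h \<in> {1..n} \<and> h \<noteq> j}"
        using 2 img_\<sigma>S_PC[OF jm] by simp
      have "PCl n j - {Neg (p k j), Pos (p j j)} \<subseteq> insert (Pos (b1 j)) {Pos (p j h) | h. h \<in> {1..n} \<and> h \<noteq> j}"
        unfolding PCl_def by auto
      then show "PCl n j - {Neg (p k j), Pos (p j j)} \<subseteq> img (\<sigma>S j k) (PCl n x)" by (simp only: e)
      show "BCl j k j - {Neg (p k j)} = {lit_neg (Pos (p j j))}" using jm unfolding BCl_def by auto
      show "Pos (p j j) \<notin> img (\<sigma>S j k) (PCl n x)" unfolding e by auto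
      show "lit_neg (Pos (p j j)) \<notin> img (\<sigma>S j k) (PCl n x)" unfolding e by auto
      show "pinj (\<sigma>S j k)" by (rule pinj_\<sigma>S)
      show "tfree (PCl n x)" by (rule tfree_PCl)
    qed
  next
    case 3
    have "\<forall>l\<in>PCl n x. \<sigma>S j k (lit_var l) = Lit (Pos (lit_var l))"
      by (rule fix_PCl) (use 3 in \<open>auto simp: \<sigma>S_def sw_def\<close>)
    moreover have "PCl n x \<in> GS" using PCl_in x by blast
    moreover have "Pos (p k j) \<notin> PCl n x" using 3 unfolding PCl_def by auto
    ultimately show ?thesis using pinj_\<sigma>S tfree_PCl by (intro good_id) auto
  qed
qed

lemma gS_HB:
  assumes v: "valid3 m n x y h" and E: "E = HCl x y h \<or> E = BCl x y h"
  shows "good (\<sigma>S j k) (Neg (p k j)) GS E"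
proof -
  have Ex: "Neg (p x h) \<in> E" "Neg (p y h) \<in> E" using E unfolding HCl_def BCl_def by auto
  have tf: "tfree E" using E tfree_HCl tfree_BCl by auto
  have vv: "1 \<le> x" "x < y" "y \<le> m" "1 \<le> h" "h \<le> n" using v unfolding valid3_def by auto
  consider "h = j \<and> (x = k \<or> y = k)" | "\<not> (h = j \<and> (x = k \<or> y = k))" "h = j \<and> (x = j \<or> y = j)"
    | "\<not> (h = j \<and> (x = k \<or> y = k))" "\<not> (h = j \<and> (x = j \<or> y = j))" by blast
  then show ?thesis
  proof cases
    case 1
    have "\<sigma>S j k (p k j) = Const False" unfolding \<sigma>S_def by simp
    then show ?thesis using 1 Ex by (intro good_true[of "Neg (p k j)"]) auto
  next
    case 2
    define z where "z = (if x = j then y else x)"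
    have z: "z \<noteq> k" "z \<noteq> j" "1 \<le> z" "z \<le> m" "Neg (p z j) \<in> E"
      using 2 vv Ex jk unfolding z_def by auto
    show ?thesis
    proof (rule good_W1[where E'="{Neg (p z j), Neg (p k j)}"])
      show "{Neg (p z j), Neg (p k j)} \<in> GS" using BC_sym_in[OF lowB] z jk by auto
      show "lit_neg (Neg (p k j)) \<notin> {Neg (p z j), Neg (p k j)}" by auto
      have "\<sigma>S j k (p z j) = Lit (Pos (p z j))" using z by (subst \<sigma>S_p) (auto simp: sw_def)
      then have "Neg (p z j) \<in> img (\<sigma>S j k) E" using z(5) by (rule img_Neg[rotated])
      then show "{Neg (p z j), Neg (p k j)} - {Neg (p k j)} \<subseteq> img (\<sigma>S j k) E" by auto
    qed (use pinj_\<sigma>S tf in auto)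
    next
    case 3
    have s: "sw j k x \<noteq> sw j k y" using vv sw_inj by force
    have r: "1 \<le> sw j k x \<and> sw j k x \<le> m" "1 \<le> sw j k y \<and> sw j k y \<le> m"
      using swr vv by auto
    show ?thesis
    proof (rule good_W1[where E'="{Neg (p (sw j k x) h), Neg (p (sw j k y) h)}"])
      show "{Neg (p (sw j k x) h), Neg (p (sw j k y) h)} \<in> GS" using BC_sym_in[OF lowB] s r vv by auto
      show "lit_neg (Neg (p k j)) \<notin> {Neg (p (sw j k x) h), Neg (p (sw j k y) h)}" by auto
      have "\<sigma>S j k (p x h) = Lit (Pos (p (sw j k x) h))" using 3 by (intro \<sigma>S_p) auto
      then have a: "Neg (p (sw j k x) h) \<in> img (\<sigma>S j k) E" using Ex(1) by (rule img_Neg[rotated])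
      have "\<sigma>S j k (p y h) = Lit (Pos (p (sw j k y) h))" using 3 by (intro \<sigma>S_p) auto
      then have b: "Neg (p (sw j k y) h) \<in> img (\<sigma>S j k) E" using Ex(2) by (rule img_Neg[rotated])
      show "{Neg (p (sw j k x) h), Neg (p (sw j k y) h)} - {Neg (p k j)} \<subseteq> img (\<sigma>S j k) E"
        using a b by auto
    qed (use pinj_\<sigma>S tf in auto)
  qed
qed

lemma gS_N3: "good (\<sigma>S j k) (Neg (p k j)) GS (N3 x y h)"
  by (rule good_true[of "Neg (b3 x y h)"]) (auto simp: \<sigma>S_def)

lemma gS_NP:
  assumes E: "NP k' j' \<in> P" and r: "1 \<le> j'" "j' \<le> j" "j' < k'" "k' \<le> m"
  shows "good (\<sigma>S j k) (Neg (p k j)) GS (NP k' j')"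
proof -
  consider "j' = j" "k' = k" | "j' = j" "k' \<noteq> k" | "j' < j" using r by linarith
  then show ?thesis
  proof cases
    case 1 then show ?thesis by (intro good_true[of "Neg (p k j)"]) (auto simp: \<sigma>S_def)
  next
    case 2
    have "\<sigma>S j k (p k' j') = Lit (Pos (p k' j'))" using 2 r by (subst \<sigma>S_p) (auto simp: sw_def)
    then show ?thesis using E 2 pinj_\<sigma>S tfree_unit by (intro good_id) auto
  next
    case 3
    have s: "1 \<le> sw j k k' \<and> sw j k k' \<le> m" "j' < sw j k k'" using swr jk r 3
      unfolding sw_def by auto
    show ?thesis
    proof (rule good_W1[where E'="NP (sw j k k') j'"])
      show "NP (sw j k k') j' \<in> GS" using lowU s 3 r by auto
      have "\<sigma>S j k (p k' j') = Lit (Pos (p (sw j k k') j'))" using 3 by (intro \<sigma>S_p) auto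
      then have "Neg (p (sw j k k') j') \<in> img (\<sigma>S j k) (NP k' j')" by (intro img_Neg) auto
      then show "NP (sw j k k') j' - {Neg (p k j)} \<subseteq> img (\<sigma>S j k) (NP k' j')" by auto
    qed (use pinj_\<sigma>S tfree_unit in auto)
  qed
qed

lemma costS:
  assumes "extends_neg \<tau> (NP k j)"
  shows "cost (BPHP_blocks m n) (comp_subst \<tau> (\<sigma>S j k)) \<le> cost (BPHP_blocks m n) \<tau>"
proof -
  let ?BV = "BPHP_blocks m n"
  let ?T = "{b \<in> ?BV. comp_subst \<tau> (\<sigma>S j k) b}" and ?S = "{b \<in> ?BV. \<tau> b}"
  define f where "f = (\<lambda>b. case b of b1 x \<Rightarrow> b1 (sw j k x) | _ \<Rightarrow> b)"
  have inj: "inj f"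
  proof (rule injI)
    fix a b assume "f a = f b" then show "a = b"
      unfolding f_def by (cases a; cases b) (auto dest: sw_inj)
  qed
  have sub: "f ` ?T \<subseteq> ?S"
  proof
    fix c assume "c \<in> f ` ?T"
    then obtain b where b: "b \<in> ?BV" "comp_subst \<tau> (\<sigma>S j k) b" "c = f b" by auto
    from b(1) consider x where "b = b1 x" "1 \<le> x" "x \<le> m" | x y h where "b = b3 x y h"
      unfolding BPHP_blocks_def by auto
    then show "c \<in> ?S"
    proof cases
      case 1
      have "1 \<le> sw j k x \<and> sw j k x \<le> m" using swr 1 by auto
      then show ?thesis using 1 b unfolding BPHP_blocks_def f_def
        by (auto simp: comp_subst_def \<sigma>S_def)
    next
      case 2 then show ?thesis using b by (simp add: comp_subst_def \<sigma>S_def)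
    qed
  qed
  have "cost ?BV (comp_subst \<tau> (\<sigma>S j k)) = card (f ` ?T)"
    unfolding cost_def by (rule card_image[symmetric]) (use inj in \<open>auto intro: inj_on_subset\<close>)
  also have "\<dots> \<le> card ?S" by (rule card_mono) (use finite_BV sub in auto)
  finally show ?thesis unfolding cost_def .
qed

lemma casesS:
  assumes E: "E \<in> GS \<union> {{c}}" and prev: "P \<subseteq> UpS m n j"
  shows "E = {c} \<or> (\<exists>x. E = PCl n x \<and> 1 \<le> x \<and> x \<le> m)
    \<or> (\<exists>x y h. E = HCl x y h \<and> valid3 m n x y h)
    \<or> (\<exists>x y h. E = BCl x y h \<and> valid3 m n x y h)
    \<or> (\<exists>x y h. E = N3 x y h)
    \<or> (\<exists>k' j'. E = NP k' j' \<and> E \<in> P \<and> 1 \<le> j' \<and> j' \<le> j \<and> j' < k' \<and> k' \<le> m)"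
proof -
  consider "E = {c}" | "E \<in> BPHP m n" | "E \<in> P" using E by blast
  then show ?thesis
  proof cases
    case 2
    then have "E \<in> {PCl n i | i. 1 \<le> i \<and> i \<le> m} \<or> E \<in> {HCl i k j | i k j. valid3 m n i k j}"
      unfolding BPHP_alt by blast
    then show ?thesis by blast
  next
    case 3
    then have "E \<in> UpS m n j" using prev by blast
    then have "E \<in> {N3 x y h | x y h. valid3 m n x y h} \<or> E \<in> {HCl x y h | x y h. valid3 m n x y h}
     \<or> E \<in> {BCl x y h | x y h. valid3 m n x y h}
     \<or> E \<in> {NP k' j' | k' j'. 1 \<le> j' \<and> j' \<le> j \<and> j' < k' \<and> k' \<le> m}" unfolding UpS_def by blast
    then show ?thesis using 3 by blast
  qed simp
qed

lemma stepS:
  assumes prev: "P \<subseteq> UpS m n j"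
  shows "cost_SR (BPHP_blocks m n) GS (NP k j)"
proof (rule cSR_good)
  fix E assume E: "E \<in> GS \<union> {NP k j}"
  from casesS[OF E prev] show "good (\<sigma>S j k) (Neg (p k j)) GS E"
  proof (elim disjE exE conjE)
    assume "E = NP k j" then show ?thesis by (intro good_true[of "Neg (p k j)"]) (auto simp: \<sigma>S_def)
  next
    fix x assume "E = PCl n x" "1 \<le> x" "x \<le> m" then show ?thesis using gS_PC by simp
  next
    fix x y h assume "E = HCl x y h" "valid3 m n x y h"
    then show ?thesis using gS_HB by blast
  next
    fix x y h assume "E = BCl x y h" "valid3 m n x y h"
    then show ?thesis using gS_HB by blast
  next
    fix x y h assume "E = N3 x y h" then show ?thesis using gS_N3 by simp
  next
    fix k' j' assume "E = NP k' j'" "E \<in> P" "1 \<le> j'" "j' \<le> j" "j' < k'" "k' \<le> m"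
    then show ?thesis using gS_NP by simp
  qed
next
  fix \<tau> assume "extends_neg \<tau> (NP k j)"
  then show "cost (BPHP_blocks m n) (comp_subst \<tau> (\<sigma>S j k)) \<le> cost (BPHP_blocks m n) \<tau>"
    by (rule costS)
qed

end

definition Up4 :: "nat \<Rightarrow> nat \<Rightarrow> bvar cnf" where
  "Up4 m n = {N3 x y h | x y h. valid3 m n x y h} \<union> {HCl x y h | x y h. valid3 m n x y h}
     \<union> {BCl x y h | x y h. valid3 m n x y h} \<union> {NP x h | x h. x \<noteq> h}
     \<union> {PU x | x. True} \<union> {NB x | x. True}"

lemma cases4:
  assumes E: "E \<in> BPHP m n \<union> P \<union> {{c}}" and prev: "P \<subseteq> Up4 m n"
  shows "E = {c} \<or> (\<exists>x. E = PCl n x \<and> 1 \<le> x \<and> x \<le> m)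
    \<or> (\<exists>x y h. E = HCl x y h \<and> valid3 m n x y h \<and> E \<in> BPHP m n \<union> P)
    \<or> (\<exists>x y h. E = BCl x y h \<and> valid3 m n x y h \<and> E \<in> BPHP m n \<union> P)
    \<or> (\<exists>x y h. E = N3 x y h \<and> E \<in> P) \<or> (\<exists>x h. E = NP x h \<and> x \<noteq> h \<and> E \<in> P)
    \<or> (\<exists>x. E = PU x \<and> E \<in> P) \<or> (\<exists>x. E = NB x \<and> E \<in> P)"
proof -
  consider "E = {c}" | "E \<in> BPHP m n" | "E \<in> P" using E by blast
  then show ?thesis
  proof cases
    case 2
    then have "E \<in> {PCl n i | i. 1 \<le> i \<and> i \<le> m} \<or> E \<in> {HCl i k j | i k j. valid3 m n i k j}"
      unfolding BPHP_alt by blast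
    then show ?thesis using 2 by blast
  next
    case 3
    then have "E \<in> Up4 m n" using prev by blast
    then have "E \<in> {N3 x y h | x y h. valid3 m n x y h} \<or> E \<in> {HCl x y h | x y h. valid3 m n x y h}
     \<or> E \<in> {BCl x y h | x y h. valid3 m n x y h} \<or> E \<in> {NP x h | x h. x \<noteq> h}
     \<or> E \<in> {PU x | x. True} \<or> E \<in> {NB x | x. True}" unfolding Up4_def by blast
    then show ?thesis using 3 by blast
  qed simp
qed

lemma fixed_good:
  assumes "E \<in> \<Gamma>'" "lit_neg c \<notin> E" "pinj \<sigma>" "tfree E"
    "\<forall>l\<in>E. \<sigma> (lit_var l) = Lit (Pos (lit_var l))"
  shows "good \<sigma> c \<Gamma>' E"
  using good_id assms by blast

definition \<sigma>PU :: "nat \<Rightarrow> bvar subst" where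
  "\<sigma>PU j v = (case v of p x h \<Rightarrow> if x = j then Const (h = j) else Lit (Pos v)
     | b1 x \<Rightarrow> if x = j then Const False else Lit (Pos v) | b3 a b c \<Rightarrow> Lit (Pos v))"

lemma pinj_\<sigma>PU: "pinj (\<sigma>PU j)"
  unfolding pinj_def
proof (intro conjI allI impI)
  fix x show "(\<exists>b. \<sigma>PU j x = Const b) \<or> (\<exists>y. \<sigma>PU j x = Lit (Pos y))"
    unfolding \<sigma>PU_def by (cases x) auto
next
  fix x x' y assume "\<sigma>PU j x = Lit (Pos y)" "\<sigma>PU j x' = Lit (Pos y)"
  then show "x = x'" unfolding \<sigma>PU_def by (cases x; cases x') (auto split: if_splits)
qed

context
  fixes m n j :: nat and P :: "bvar cnf"
  assumes jn: "1 \<le> j" "j \<le> n" "n < m"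
    and low: "\<forall>x. 1 \<le> x \<and> x \<le> m \<and> x \<noteq> j \<longrightarrow> NP x j \<in> P"
begin

abbreviation "G4 \<equiv> BPHP m n \<union> P"

lemma gPU_PC:
  assumes x: "1 \<le> x" "x \<le> m"
  shows "good (\<sigma>PU j) (Pos (p j j)) G4 (PCl n x)"
proof (cases "x = j")
  case True then show ?thesis using jn by (intro good_true[of "Pos (p j j)"]) (auto simp: PCl_def \<sigma>PU_def)
next
  case False
  have "\<forall>l\<in>PCl n x. \<sigma>PU j (lit_var l) = Lit (Pos (lit_var l))"
    by (rule fix_PCl) (use False in \<open>auto simp: \<sigma>PU_def\<close>)
  moreover have "PCl n x \<in> G4" using PCl_in x by blast
  moreover have "Neg (p j j) \<notin> PCl n x" unfolding PCl_def by auto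
  ultimately show ?thesis using pinj_\<sigma>PU tfree_PCl by (intro good_id) auto
qed

lemma gPU_HB:
  assumes v: "valid3 m n x y h" and E: "E = HCl x y h \<or> E = BCl x y h" and EG: "E \<in> G4"
  shows "good (\<sigma>PU j) (Pos (p j j)) G4 E"
proof -
  have Ex: "Neg (p x h) \<in> E" "Neg (p y h) \<in> E" using E unfolding HCl_def BCl_def by auto
  have tf: "tfree E" using E tfree_HCl tfree_BCl by auto
  have vv: "1 \<le> x" "x < y" "y \<le> m" "1 \<le> h" "h \<le> n" using v unfolding valid3_def by auto
  consider "(x = j \<or> y = j) \<and> h \<noteq> j" | "(x = j \<or> y = j) \<and> h = j" | "x \<noteq> j" "y \<noteq> j" by blast
  then show ?thesis
  proof cases
    case 1
    have "\<sigma>PU j (p j h) = Const False" using 1 unfolding \<sigma>PU_def by simp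
    then show ?thesis using 1 Ex by (intro good_true[of "Neg (p j h)"]) auto
  next
    case 2
    define z where "z = (if x = j then y else x)"
    have z: "z \<noteq> j" "1 \<le> z" "z \<le> m" "Neg (p z j) \<in> E"
      using 2 vv Ex unfolding z_def by auto
    show ?thesis
    proof (rule good_W1[where E'="NP z j"])
      show "NP z j \<in> G4" using low z by auto
      have "\<sigma>PU j (p z j) = Lit (Pos (p z j))" using z unfolding \<sigma>PU_def by simp
      then have "Neg (p z j) \<in> img (\<sigma>PU j) E" using z(4) by (rule img_Neg[rotated])
      then show "NP z j - {Pos (p j j)} \<subseteq> img (\<sigma>PU j) E" by auto
    qed (use pinj_\<sigma>PU tf z in auto)
  next
    case 3
    have "\<forall>l\<in>E. \<sigma>PU j (lit_var l) = Lit (Pos (lit_var l))"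
      using E 3 by (auto simp: HCl_def BCl_def \<sigma>PU_def)
    moreover have "Neg (p j j) \<notin> E" using E 3 by (auto simp: HCl_def BCl_def)
    ultimately show ?thesis using EG pinj_\<sigma>PU tf by (intro good_id) auto
  qed
qed

lemma gPU_unit:
  assumes EG: "{l} \<in> G4"
    and nl: "l \<noteq> Neg (p j j)"
    and fx: "\<sigma>PU j (lit_var l) = Lit (Pos (lit_var l)) \<or> subst_lit (\<sigma>PU j) l = Const True"
  shows "good (\<sigma>PU j) (Pos (p j j)) G4 {l}"
  using fx
proof
  assume "\<sigma>PU j (lit_var l) = Lit (Pos (lit_var l))"
  then show ?thesis using EG nl pinj_\<sigma>PU tfree_unit by (intro good_id) auto
next
  assume "subst_lit (\<sigma>PU j) l = Const True" then show ?thesis by (intro good_true[of l]) auto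
qed

lemma stepPU:
  assumes prev: "P \<subseteq> Up4 m n"
  shows "cost_SR (BPHP_blocks m n) G4 (PU j)"
proof (rule cSR_good)
  fix E assume E: "E \<in> G4 \<union> {PU j}"
  from cases4[OF E prev] show "good (\<sigma>PU j) (Pos (p j j)) G4 E"
  proof (elim disjE exE conjE)
    assume "E = PU j" then show ?thesis by (intro good_true[of "Pos (p j j)"]) (auto simp: \<sigma>PU_def)
  next
    fix x assume "E = PCl n x" "1 \<le> x" "x \<le> m" then show ?thesis using gPU_PC by simp
  next
    fix x y h assume "E = HCl x y h" "valid3 m n x y h" "E \<in> G4"
    then show ?thesis using gPU_HB by blast
  next
    fix x y h assume "E = BCl x y h" "valid3 m n x y h" "E \<in> G4"
    then show ?thesis using gPU_HB by blast
  next
    fix x y h assume "E = N3 x y h" "E \<in> P"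
    then show ?thesis using gPU_unit[of "Neg (b3 x y h)"] by (auto simp: \<sigma>PU_def)
  next
    fix x h assume "E = NP x h" "x \<noteq> h" "E \<in> P"
    then show ?thesis using gPU_unit[of "Neg (p x h)"] by (auto simp: \<sigma>PU_def)
  next
    fix x assume "E = PU x" "E \<in> P"
    then show ?thesis using gPU_unit[of "Pos (p x x)"] by (auto simp: \<sigma>PU_def)
  next
    fix x assume "E = NB x" "E \<in> P"
    then show ?thesis using gPU_unit[of "Neg (b1 x)"] by (auto simp: \<sigma>PU_def)
  qed
next
  fix \<tau> show "cost (BPHP_blocks m n) (comp_subst \<tau> (\<sigma>PU j)) \<le> cost (BPHP_blocks m n) \<tau>"
  proof (rule cost_le_pointwise[OF finite_BV])
    fix b assume "b \<in> BPHP_blocks m n" "comp_subst \<tau> (\<sigma>PU j) b"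
    then show "\<tau> b" unfolding BPHP_blocks_def
      by (auto simp: comp_subst_def \<sigma>PU_def split: if_splits)
  qed
qed

end


definition \<sigma>V :: "bvar \<Rightarrow> bvar subst" where
  "\<sigma>V w v = (if v = w then Const False else Lit (Pos v))"

lemma pinj_\<sigma>V: "pinj (\<sigma>V w)"
  unfolding pinj_def \<sigma>V_def by auto

lemma gV_fixed:
  assumes "E \<in> G" "lit_neg c \<notin> E" "tfree E" "\<forall>l\<in>E. lit_var l \<noteq> w"
  shows "good (\<sigma>V w) c G E"
  by (rule good_id) (use assms pinj_\<sigma>V in \<open>auto simp: \<sigma>V_def\<close>)

lemma gV_neg:
  assumes "Neg w \<in> E"
  shows "good (\<sigma>V w) c G E"
  by (rule good_true[OF assms]) (simp add: \<sigma>V_def)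

context
  fixes m n j :: nat and P :: "bvar cnf" and w :: bvar
  assumes jn: "1 \<le> j" "j \<le> n" "n < m"
    and low: "PU j \<in> P"
    and w: "w = b1 j \<or> (\<exists>h. w = p j h \<and> h \<noteq> j)"
begin

abbreviation "G5 \<equiv> BPHP m n \<union> P"

lemma wj: "w \<noteq> p j j" using w by auto

lemma gV_PC:
  assumes x: "1 \<le> x" "x \<le> m"
  shows "good (\<sigma>V w) (Neg w) G5 (PCl n x)"
proof (cases "x = j")
  case True
  show ?thesis
  proof (rule good_W1[where E'="PU j"])
    show "PU j \<in> G5" using low by simp
    show "lit_neg (Neg w) \<notin> PU j" using wj by simp
    have "\<sigma>V w (p j j) = Lit (Pos (p j j))" using wj unfolding \<sigma>V_def by auto
    moreover have "Pos (p j j) \<in> PCl n x" using True jn unfolding PCl_def by auto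
    ultimately have "Pos (p j j) \<in> img (\<sigma>V w) (PCl n x)" by (intro img_Pos)
    then show "PU j - {Neg w} \<subseteq> img (\<sigma>V w) (PCl n x)" by auto
  qed (use pinj_\<sigma>V tfree_PCl in auto)
next
  case False
  show ?thesis
  proof (rule gV_fixed)
    show "PCl n x \<in> G5" using PCl_in x by blast
    show "lit_neg (Neg w) \<notin> PCl n x" using w False unfolding PCl_def by auto
    show "\<forall>l\<in>PCl n x. lit_var l \<noteq> w" using w False unfolding PCl_def by auto
  qed (rule tfree_PCl)
qed

lemma gV_HB:
  assumes E: "E = HCl x y h \<or> E = BCl x y h" and EG: "E \<in> G5"
  shows "good (\<sigma>V w) (Neg w) G5 E"
proof (cases "Neg w \<in> E")
  case True then show ?thesis by (rule gV_neg)
next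
  case False
  show ?thesis
  proof (rule gV_fixed[OF EG])
    show "lit_neg (Neg w) \<notin> E" using w E unfolding HCl_def BCl_def by auto
    show "tfree E" using E tfree_HCl tfree_BCl by auto
    show "\<forall>l\<in>E. lit_var l \<noteq> w" using w E False unfolding HCl_def BCl_def by auto
  qed
qed

lemma gV_unit:
  assumes EG: "{l} \<in> G5" and nl: "l \<noteq> Pos w"
  shows "good (\<sigma>V w) (Neg w) G5 {l}"
proof (cases "l = Neg w")
  case True then show ?thesis using gV_neg by simp
next
  case False
  have "lit_var l \<noteq> w" using False nl by (cases l) auto
  then show ?thesis using EG nl tfree_unit by (intro gV_fixed) auto
qed

lemma stepV:
  assumes prev: "P \<subseteq> Up4 m n"
  shows "cost_SR (BPHP_blocks m n) G5 {Neg w}"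
proof (rule cSR_good)
  fix E assume E: "E \<in> G5 \<union> {{Neg w}}"
  from cases4[OF E prev] show "good (\<sigma>V w) (Neg w) G5 E"
  proof (elim disjE exE conjE)
    assume "E = {Neg w}" then show ?thesis using gV_neg by simp
  next
    fix x assume "E = PCl n x" "1 \<le> x" "x \<le> m" then show ?thesis using gV_PC by simp
  next
    fix x y h assume "E = HCl x y h" "valid3 m n x y h" "E \<in> G5"
    then show ?thesis using gV_HB by blast
  next
    fix x y h assume "E = BCl x y h" "valid3 m n x y h" "E \<in> G5"
    then show ?thesis using gV_HB by blast
  next
    fix x y h assume "E = N3 x y h" "E \<in> P"
    then show ?thesis using gV_unit[of "Neg (b3 x y h)"] by auto
  next
    fix x h assume "E = NP x h" "x \<noteq> h" "E \<in> P"
    then show ?thesis using gV_unit[of "Neg (p x h)"] by auto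
  next
    fix x assume "E = PU x" "E \<in> P"
    then have "Pos (p x x) \<noteq> Pos w" using w by auto
    then show ?thesis using gV_unit[of "Pos (p x x)"] \<open>E = PU x\<close> \<open>E \<in> P\<close> by auto
  next
    fix x assume "E = NB x" "E \<in> P"
    then show ?thesis using gV_unit[of "Neg (b1 x)"] by auto
  qed
next
  fix \<tau> show "cost (BPHP_blocks m n) (comp_subst \<tau> (\<sigma>V w)) \<le> cost (BPHP_blocks m n) \<tau>"
  proof (rule cost_le_pointwise[OF finite_BV])
    fix b assume "b \<in> BPHP_blocks m n" "comp_subst \<tau> (\<sigma>V w) b"
    then show "\<tau> b" by (auto simp: comp_subst_def \<sigma>V_def split: if_splits)
  qed
qed

end

lemma derivation_append:
  assumes "derivation BV \<Gamma> xs"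
    and "\<And>ps y rs. ys = ps @ y # rs \<Longrightarrow> valid_step BV \<Gamma> (xs @ ps) y"
  shows "derivation BV \<Gamma> (xs @ ys)"
  unfolding derivation_def
proof (intro allI impI)
  fix i assume i: "i < length (xs @ ys)"
  show "valid_step BV \<Gamma> (take i (xs @ ys)) ((xs @ ys) ! i)"
  proof (cases "i < length xs")
    case True
    then show ?thesis using assms(1) unfolding derivation_def by (simp add: nth_append)
  next
    case False
    define r where "r = i - length xs"
    have r: "r < length ys" "i = length xs + r" using i False unfolding r_def by auto
    have "ys = take r ys @ ys ! r # drop (Suc r) ys" using r(1) by (simp add: id_take_nth_drop)
    then have "valid_step BV \<Gamma> (xs @ take r ys) (ys ! r)" by (rule assms(2))
    then show ?thesis using r by (simp add: nth_append)
  qed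
qed

lemma app_split:
  assumes "xs @ zs = ps @ y # rs"
  shows "(\<exists>rs'. xs = ps @ y # rs') \<or> (\<exists>ps'. ps = xs @ ps' \<and> zs = ps' @ y # rs)"
proof -
  obtain us where "xs = ps @ us \<and> us @ zs = y # rs \<or> xs @ us = ps \<and> zs = us @ y # rs"
    using assms by (auto simp: append_eq_append_conv2)
  then show ?thesis
  proof
    assume a: "xs = ps @ us \<and> us @ zs = y # rs"
    show ?thesis
    proof (cases us)
      case Nil then show ?thesis using a by auto
    next
      case (Cons u us') then show ?thesis using a by auto
    qed
  next
    assume "xs @ us = ps \<and> zs = us @ y # rs" then show ?thesis by auto
  qed
qed

lemma concat_map_split:
  "concat (map g js) = ps @ y # rs \<Longrightarrow>
   \<exists>js1 j js2 qs rs'. js = js1 @ j # js2 \<and> g j = qs @ y # rs' \<and> ps = concat (map g js1) @ qs"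
proof (induction js arbitrary: ps)
  case Nil then show ?case by simp
next
  case (Cons a js)
  then have "g a @ concat (map g js) = ps @ y # rs" by simp
  from app_split[OF this] show ?case
  proof
    assume "\<exists>rs'. g a = ps @ y # rs'"
    then obtain rs' where "g a = ps @ y # rs'" by blast
    then show ?case by (intro exI[of _ "[]"] exI[of _ a] exI[of _ js] exI[of _ ps] exI[of _ rs']) simp
  next
    assume "\<exists>ps'. ps = g a @ ps' \<and> concat (map g js) = ps' @ y # rs"
    then obtain ps' where ps': "ps = g a @ ps'" "concat (map g js) = ps' @ y # rs" by blast
    from Cons.IH[OF ps'(2)] obtain js1 j js2 qs rs' where
      "js = js1 @ j # js2" "g j = qs @ y # rs'" "ps' = concat (map g js1) @ qs" by blast
    then show ?case using ps'(1)
      by (intro exI[of _ "a # js1"] exI[of _ j] exI[of _ js2] exI[of _ qs] exI[of _ rs']) simp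
  qed
qed

lemma map_split:
  assumes "map f xs = ps @ y # rs"
  shows "length ps < length xs \<and> y = f (xs ! length ps) \<and> ps = map f (take (length ps) xs)"
proof -
  have l: "length ps < length xs" using arg_cong[OF assms, of length] by simp
  have "map f xs ! length ps = y" using assms by simp
  then have "y = f (xs ! length ps)" using l by simp
  moreover have "take (length ps) (map f xs) = ps" using assms by simp
  ultimately show ?thesis using l by (simp add: take_map)
qed

lemma upt_split:
  assumes "[a..<b] = xs @ j # ys"
  shows "xs = [a..<j] \<and> a \<le> j \<and> j < b"
proof -
  have l: "length xs < b - a" using arg_cong[OF assms, of length] by simp
  have "[a..<b] ! length xs = j" using assms by simp
  then have j: "j = a + length xs" using l by simp
  have "take (length xs) [a..<b] = xs" using assms by simp
  then have "xs = [a..<a + length xs]" using l by (simp add: take_upt)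
  then show ?thesis using j l by simp
qed

lemma len_concat_le:
  assumes "\<forall>x\<in>set xs. length (f x) \<le> c"
  shows "length (concat (map f xs)) \<le> length xs * c"
  using assms by (induction xs) auto

definition Q :: "nat \<Rightarrow> nat \<Rightarrow> nat \<Rightarrow> bvar clause" where
  "Q n i t = insert (Pos (b1 i)) {Pos (p i h) | h. t < h \<and> h \<le> n}"

lemma Q0: "Q n i 0 = PCl n i"
  unfolding Q_def PCl_def by auto

lemma Qn: "Q n i n = {Pos (b1 i)}"
  unfolding Q_def by auto

lemma Q_res: "1 \<le> t \<Longrightarrow> Q n i t = (Q n i (t - 1) - {Pos (p i t)}) \<union> ({Neg (p i t)} - {Neg (p i t)})"
  unfolding Q_def by auto

lemma Q_has: "1 \<le> t \<Longrightarrow> t \<le> n \<Longrightarrow> Pos (p i t) \<in> Q n i (t - 1)"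
  unfolding Q_def by auto

definition trips :: "nat \<Rightarrow> nat \<Rightarrow> (nat \<times> nat \<times> nat) list" where
  "trips m n = concat (map (\<lambda>i. concat (map (\<lambda>k. map (\<lambda>j. (i,k,j)) [1..<n+1]) [i+1..<m+1])) [1..<m+1])"

definition L1 :: "nat \<Rightarrow> nat \<Rightarrow> bvar clause list" where
  "L1 m n = map (\<lambda>(i,k,j). N3 i k j) (trips m n)"
definition L2 :: "nat \<Rightarrow> nat \<Rightarrow> bvar clause list" where
  "L2 m n = concat (map (\<lambda>(i,k,j). [HCl i k j, BCl i k j]) (trips m n))"
definition g3 :: "nat \<Rightarrow> nat \<Rightarrow> bvar clause list" where
  "g3 m j = map (\<lambda>k. NP k j) [j+1..<m+1]"
definition L3 :: "nat \<Rightarrow> nat \<Rightarrow> bvar clause list" where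
  "L3 m n = concat (map (g3 m) [1..<n+1])"
definition g4 :: "nat \<Rightarrow> nat \<Rightarrow> bvar clause list" where
  "g4 n j = PU j # map (\<lambda>h. NP j h) (filter (\<lambda>h. h \<noteq> j) [1..<n+1]) @ [NB j]"
definition L4 :: "nat \<Rightarrow> bvar clause list" where
  "L4 n = concat (map (g4 n) [1..<n+1])"
definition L5 :: "nat \<Rightarrow> nat \<Rightarrow> bvar clause list" where
  "L5 m n = concat (map (\<lambda>i. map (Q n i) [0..<n+1]) [n+1..<m+1])"

lemma in_cm: "x \<in> set (f a) \<Longrightarrow> a \<in> set xs \<Longrightarrow> x \<in> set (concat (map f xs))"
  by auto

lemma trips_sub: "t \<in> set (trips m n) \<Longrightarrow> (case t of (i,k,j) \<Rightarrow> valid3 m n i k j)"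
  unfolding trips_def valid3_def by auto

lemma trips_in: "valid3 m n i k j \<Longrightarrow> (i,k,j) \<in> set (trips m n)"
  unfolding trips_def valid3_def
  by (rule in_cm[where a=i], rule in_cm[where a=k]) auto

lemma L1_sub: "set (L1 m n) \<subseteq> {N3 i k j | i k j. valid3 m n i k j}"
  unfolding L1_def using trips_sub by fastforce

lemma L1_in: "valid3 m n i k j \<Longrightarrow> N3 i k j \<in> set (L1 m n)"
  unfolding L1_def using trips_in by force

lemma L2_sub: "set (L2 m n) \<subseteq> {HCl i k j | i k j. valid3 m n i k j} \<union> {BCl i k j | i k j. valid3 m n i k j}"
  unfolding L2_def using trips_sub by fastforce

lemma L2_in: "valid3 m n i k j \<Longrightarrow> BCl i k j \<in> set (L2 m n)"
  unfolding L2_def by (rule in_cm[where a="(i,k,j)"]) (auto intro: trips_in)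

lemma L3_sub: "set (L3 m n) \<subseteq> {NP k j | k j. 1 \<le> j \<and> j \<le> n \<and> j < k \<and> k \<le> m}"
  unfolding L3_def g3_def by auto

lemma L3_in: "1 \<le> j \<Longrightarrow> j \<le> n \<Longrightarrow> j < k \<Longrightarrow> k \<le> m \<Longrightarrow> NP k j \<in> set (L3 m n)"
  unfolding L3_def g3_def by (rule in_cm[where a=j]) auto

lemma L4_sub: "set (L4 n) \<subseteq> {PU j | j. True} \<union> {NP j h | j h. h \<noteq> j} \<union> {NB j | j. True}"
  unfolding L4_def g4_def by auto

lemma L4_in: "1 \<le> j \<Longrightarrow> j \<le> n \<Longrightarrow> NB j \<in> set (L4 n)"
  unfolding L4_def g4_def by (rule in_cm[where a=j]) auto

lemma L4_inNP: "1 \<le> j \<Longrightarrow> j \<le> n \<Longrightarrow> 1 \<le> h \<Longrightarrow> h \<le> n \<Longrightarrow> h \<noteq> j \<Longrightarrow> NP j h \<in> set (g4 n j)"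
  unfolding g4_def by auto

lemma L5_in: "n < i \<Longrightarrow> i \<le> m \<Longrightarrow> Q n i n \<in> set (L5 m n)"
  unfolding L5_def by (rule in_cm[where a=i]) auto

lemma vars_p: "1 \<le> x \<Longrightarrow> x \<le> m \<Longrightarrow> 1 \<le> h \<Longrightarrow> h \<le> n \<Longrightarrow> p x h \<in> vars (BPHP m n)"
  unfolding vars_def using PCl_in[of x m n] by (force simp: PCl_def)

lemma vars_b1: "1 \<le> x \<Longrightarrow> x \<le> m \<Longrightarrow> b1 x \<in> vars (BPHP m n)"
  unfolding vars_def using PCl_in[of x m n] by (force simp: PCl_def)

lemma vars_b3: "valid3 m n x y h \<Longrightarrow> b3 x y h \<in> vars (BPHP m n)"
  unfolding vars_def using HCl_in[of m n x y h] by (force simp: HCl_def)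

lemma cv_unit: "clause_vars {l} = {lit_var l}"
  unfolding clause_vars_def by simp

lemma vs_cost: "cost_SR BV (\<Gamma> \<union> set prev) D \<Longrightarrow> clause_vars D \<subseteq> vars \<Gamma> \<Longrightarrow> valid_step BV \<Gamma> prev D"
  unfolding valid_step_def by blast

lemma vs_res: "Ca \<in> set prev \<Longrightarrow> Cb \<in> set prev \<Longrightarrow> Pos x \<in> Ca \<Longrightarrow> Neg x \<in> Cb \<Longrightarrow>
   D = (Ca - {Pos x}) \<union> (Cb - {Neg x}) \<Longrightarrow> valid_step BV \<Gamma> prev D"
  unfolding valid_step_def by blast

lemma vs_ax: "D \<in> \<Gamma> \<Longrightarrow> valid_step BV \<Gamma> prev D"
  unfolding valid_step_def by blast

lemma der_nil: "derivation BV \<Gamma> []" unfolding derivation_def by simp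

context
  fixes m n :: nat
  assumes mn: "1 \<le> n" "n < m"
begin

lemma der1: "derivation (BPHP_blocks m n) (BPHP m n) ([] @ L1 m n)"
proof (rule derivation_append[OF der_nil])
  fix ps y rs assume e: "L1 m n = ps @ y # rs"
  have "y \<in> set (L1 m n)" using e by simp
  then obtain i k j where y: "y = N3 i k j" "valid3 m n i k j" using L1_sub by blast
  have "set ps \<subseteq> set (L1 m n)" using e by auto
  then have ps: "set ps \<subseteq> {N3 x y h | x y h. valid3 m n x y h}" using L1_sub by blast
  show "valid_step (BPHP_blocks m n) (BPHP m n) ([] @ ps) y"
  proof (rule vs_cost)
    show "cost_SR (BPHP_blocks m n) (BPHP m n \<union> set ([] @ ps)) y"
      using step1[OF y(2) ps] y(1) by simp
    show "clause_vars y \<subseteq> vars (BPHP m n)" using y vars_b3 by (simp add: cv_unit)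
  qed
qed

lemma two_split: "[a, b] = qs @ y # rs \<Longrightarrow> (qs = [] \<and> y = a) \<or> (qs = [a] \<and> y = b)"
  by (cases qs) (auto simp: Cons_eq_append_conv)

lemma der2: "derivation (BPHP_blocks m n) (BPHP m n) (L1 m n @ L2 m n)"
proof (rule derivation_append)
  show "derivation (BPHP_blocks m n) (BPHP m n) (L1 m n)" using der1 by simp
next
  fix ps y rs assume e: "L2 m n = ps @ y # rs"
  from concat_map_split[OF e[unfolded L2_def]] obtain js1 t js2 qs rs' where
    s: "trips m n = js1 @ t # js2" "(case t of (i,k,j) \<Rightarrow> [HCl i k j, BCl i k j]) = qs @ y # rs'"
       "ps = concat (map (\<lambda>(i,k,j). [HCl i k j, BCl i k j]) js1) @ qs" by blast
  obtain i k j where t: "t = (i,k,j)" by (cases t) auto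
  have v: "valid3 m n i k j" using trips_sub[of t m n] s(1) t by simp
  from two_split[OF s(2)[unfolded t, simplified]]
  show "valid_step (BPHP_blocks m n) (BPHP m n) (L1 m n @ ps) y"
  proof
    assume "qs = [] \<and> y = HCl i k j"
    then show ?thesis using HCl_in[OF v] by (intro vs_ax) simp
  next
    assume a: "qs = [HCl i k j] \<and> y = BCl i k j"
    show ?thesis
    proof (rule vs_res[where Ca="HCl i k j" and Cb="N3 i k j" and x="b3 i k j"])
      show "HCl i k j \<in> set (L1 m n @ ps)" using a s(3) by simp
      show "N3 i k j \<in> set (L1 m n @ ps)" using L1_in[OF v] by simp
      show "Pos (b3 i k j) \<in> HCl i k j" unfolding HCl_def by simp
      show "Neg (b3 i k j) \<in> N3 i k j" by simp
      show "y = (HCl i k j - {Pos (b3 i k j)}) \<union> (N3 i k j - {Neg (b3 i k j)})"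
        using a unfolding HCl_def BCl_def by auto
    qed
  qed
qed

lemma der3: "derivation (BPHP_blocks m n) (BPHP m n) ((L1 m n @ L2 m n) @ L3 m n)"
proof (rule derivation_append[OF der2])
  fix ps y rs assume e: "L3 m n = ps @ y # rs"
  from concat_map_split[OF e[unfolded L3_def]] obtain js1 j js2 qs rs' where
    s: "[1..<n+1] = js1 @ j # js2" "g3 m j = qs @ y # rs'" "ps = concat (map (g3 m) js1) @ qs" by blast
  from upt_split[OF s(1)] have j: "js1 = [1..<j]" "1 \<le> j" "j \<le> n" by auto
  from map_split[OF s(2)[unfolded g3_def]] have
    q: "length qs < length [j+1..<m+1]" "y = NP ([j+1..<m+1] ! length qs) j" by auto
  define k where "k = j + 1 + length qs"
  have l: "length qs < m - j" using q(1) by (simp del: upt_Suc)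
  have "[j+1..<m+1] ! length qs = j + 1 + length qs" using l by (simp del: upt_Suc add: nth_upt)
  then have k: "j < k" "k \<le> m" "y = NP k j" using q l unfolding k_def by auto
  have qs_sub: "set qs \<subseteq> set (g3 m j)" using s(2) by auto
  let ?P = "set ((L1 m n @ L2 m n) @ ps)"
  have lowB: "\<forall>x y h. valid3 m n x y h \<longrightarrow> BCl x y h \<in> ?P" using L2_in by auto
  have lowU: "\<forall>k' j'. 1 \<le> j' \<and> j' < j \<and> j' < k' \<and> k' \<le> m \<longrightarrow> NP k' j' \<in> ?P"
  proof (intro allI impI)
    fix k' j' assume a: "1 \<le> j' \<and> j' < j \<and> j' < k' \<and> k' \<le> m"
    have "NP k' j' \<in> set (g3 m j')" using a unfolding g3_def by auto
    moreover have "j' \<in> set js1" using a j by auto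
    ultimately have "NP k' j' \<in> set ps" using s(3) by auto
    then show "NP k' j' \<in> ?P" by simp
  qed
  have up: "?P \<subseteq> UpS m n j"
  proof -
    have "set ps \<subseteq> {NP k' j' | k' j'. 1 \<le> j' \<and> j' \<le> j \<and> j' < k' \<and> k' \<le> m}"
    proof
      fix c assume "c \<in> set ps"
      then have "c \<in> set (concat (map (g3 m) js1)) \<or> c \<in> set qs" using s(3) by auto
      then show "c \<in> {NP k' j' | k' j'. 1 \<le> j' \<and> j' \<le> j \<and> j' < k' \<and> k' \<le> m}"
      proof
        assume "c \<in> set (concat (map (g3 m) js1))"
        then obtain j' where "j' \<in> set js1" "c \<in> set (g3 m j')" by auto
        then show ?thesis using j unfolding g3_def by auto
      next
        assume "c \<in> set qs" then have "c \<in> set (g3 m j)" using qs_sub by blast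
        then show ?thesis using j unfolding g3_def by auto
      qed
    qed
    then have 3: "set ps \<subseteq> UpS m n j" unfolding UpS_def by blast
    have 1: "set (L1 m n) \<subseteq> UpS m n j" using L1_sub[of m n] unfolding UpS_def by blast
    have 2: "set (L2 m n) \<subseteq> UpS m n j" using L2_sub[of m n] unfolding UpS_def by blast
    show ?thesis using 1 2 3 by simp
  qed
  show "valid_step (BPHP_blocks m n) (BPHP m n) ((L1 m n @ L2 m n) @ ps) y"
  proof (rule vs_cost)
    show "cost_SR (BPHP_blocks m n) (BPHP m n \<union> ?P) y"
      using stepS[OF j(2,3) k(1,2) lowB lowU up] k(3) by simp
    show "clause_vars y \<subseteq> vars (BPHP m n)" using k j vars_p[of k m j n] by (simp add: cv_unit)
  qed
qed

lemma g4_split: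
  assumes "g4 n j = qs @ y # rs'"
  shows "(qs = [] \<and> y = PU j) \<or> (PU j \<in> set qs \<and> (y = NB j \<or> (\<exists>h. y = NP j h \<and> h \<noteq> j \<and> 1 \<le> h \<and> h \<le> n)))"
proof (cases qs)
  case Nil then show ?thesis using assms unfolding g4_def by simp
next
  case (Cons a qs')
  then have "a = PU j" and r: "map (\<lambda>h. NP j h) (filter (\<lambda>h. h \<noteq> j) [1..<n+1]) @ [NB j] = qs' @ y # rs'"
    using assms unfolding g4_def by auto
  then have "y \<in> set (map (\<lambda>h. NP j h) (filter (\<lambda>h. h \<noteq> j) [1..<n+1]) @ [NB j])" by simp
  then have "y = NB j \<or> (\<exists>h. y = NP j h \<and> h \<noteq> j \<and> 1 \<le> h \<and> h \<le> n)" by auto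
  then show ?thesis using Cons \<open>a = PU j\<close> by simp
qed

lemma der4: "derivation (BPHP_blocks m n) (BPHP m n) (((L1 m n @ L2 m n) @ L3 m n) @ L4 n)"
proof (rule derivation_append[OF der3])
  fix ps y rs assume e: "L4 n = ps @ y # rs"
  from concat_map_split[OF e[unfolded L4_def]] obtain js1 j js2 qs rs' where
    s: "[1..<n+1] = js1 @ j # js2" "g4 n j = qs @ y # rs'" "ps = concat (map (g4 n) js1) @ qs" by blast
  from upt_split[OF s(1)] have j: "js1 = [1..<j]" "1 \<le> j" "j \<le> n" by auto
  let ?P = "set (((L1 m n @ L2 m n) @ L3 m n) @ ps)"
  have up: "?P \<subseteq> Up4 m n"
  proof -
    have "set ps \<subseteq> set (L4 n)" using e by auto
    then have 4: "set ps \<subseteq> Up4 m n" using L4_sub[of n] unfolding Up4_def by blast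
    have 1: "set (L1 m n) \<subseteq> Up4 m n" using L1_sub[of m n] unfolding Up4_def by blast
    have 2: "set (L2 m n) \<subseteq> Up4 m n" using L2_sub[of m n] unfolding Up4_def by blast
    have "set (L3 m n) \<subseteq> {NP x h | x h. x \<noteq> h}" using L3_sub[of m n] by fastforce
    then have 3: "set (L3 m n) \<subseteq> Up4 m n" unfolding Up4_def by blast
    show ?thesis using 1 2 3 4 by simp
  qed
  have jm: "1 \<le> j" "j \<le> n" "n < m" using j mn by auto
  from g4_split[OF s(2)]
  show "valid_step (BPHP_blocks m n) (BPHP m n) (((L1 m n @ L2 m n) @ L3 m n) @ ps) y"
  proof
    assume a: "qs = [] \<and> y = PU j"
    have low: "\<forall>x. 1 \<le> x \<and> x \<le> m \<and> x \<noteq> j \<longrightarrow> NP x j \<in> ?P"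
    proof (intro allI impI)
      fix x assume x: "1 \<le> x \<and> x \<le> m \<and> x \<noteq> j"
      show "NP x j \<in> ?P"
      proof (cases "j < x")
        case True then show ?thesis using L3_in[of j n x m] x j by simp
      next
        case False
        then have "x < j" using x by simp
        then have "NP x j \<in> set (g4 n x)" "x \<in> set js1" using L4_inNP[of x n j] x j by auto
        then have "NP x j \<in> set ps" using s(3) by auto
        then show ?thesis by simp
      qed
    qed
    show ?thesis
    proof (rule vs_cost)
      show "cost_SR (BPHP_blocks m n) (BPHP m n \<union> ?P) y"
        using stepPU[OF jm low up] a by simp
      show "clause_vars y \<subseteq> vars (BPHP m n)" using a jm vars_p[of j m j n] by (simp add: cv_unit)
    qed
  next
    assume a: "PU j \<in> set qs \<and> (y = NB j \<or> (\<exists>h. y = NP j h \<and> h \<noteq> j \<and> 1 \<le> h \<and> h \<le> n))"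
    have low: "PU j \<in> ?P" using a s(3) by auto
    from a obtain w where w: "y = {Neg w}" "w = b1 j \<or> (\<exists>h. w = p j h \<and> h \<noteq> j)" "w \<in> vars (BPHP m n)"
    proof (elim conjE disjE exE)
      assume "y = NB j" then show ?thesis using that vars_b1[of j m n] jm by auto
    next
      fix h assume "y = NP j h" "h \<noteq> j" "1 \<le> h" "h \<le> n"
      then show ?thesis using that vars_p[of j m h n] jm by auto
    qed
    show ?thesis
    proof (rule vs_cost)
      show "cost_SR (BPHP_blocks m n) (BPHP m n \<union> ?P) y"
        using stepV[OF jm low w(2) up] w(1) by simp
      show "clause_vars y \<subseteq> vars (BPHP m n)" using w by (simp add: cv_unit)
    qed
  qed
qed

lemma der5: "derivation (BPHP_blocks m n) (BPHP m n) ((((L1 m n @ L2 m n) @ L3 m n) @ L4 n) @ L5 m n)"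
proof (rule derivation_append[OF der4])
  fix ps y rs assume e: "L5 m n = ps @ y # rs"
  from concat_map_split[OF e[unfolded L5_def]] obtain js1 i js2 qs rs' where
    s: "[n+1..<m+1] = js1 @ i # js2" "map (Q n i) [0..<n+1] = qs @ y # rs'"
       "ps = concat (map (\<lambda>i. map (Q n i) [0..<n+1]) js1) @ qs" by blast
  from upt_split[OF s(1)] have i: "n < i" "i \<le> m" by auto
  from map_split[OF s(2)] have q: "length qs < length [0..<n+1]" "y = Q n i ([0..<n+1] ! length qs)"
    "qs = map (Q n i) (take (length qs) [0..<n+1])" by auto
  define t where "t = length qs"
  have l: "t < n + 1" using q(1) unfolding t_def by (simp del: upt_Suc)
  have nt: "[0..<n+1] ! t = t" using l by (simp del: upt_Suc add: nth_upt)
  have yt: "y = Q n i t" using q(2) nt unfolding t_def by simp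
  let ?prev = "(((L1 m n @ L2 m n) @ L3 m n) @ L4 n) @ ps"
  show "valid_step (BPHP_blocks m n) (BPHP m n) ?prev y"
  proof (cases "t = 0")
    case True
    then show ?thesis using yt Q0 PCl_in[of i m n] i mn by (intro vs_ax) simp
  next
    case False
    then have t1: "1 \<le> t" "t \<le> n" using l by auto
    show ?thesis
    proof (rule vs_res[where Ca="Q n i (t - 1)" and Cb="NP i t" and x="p i t"])
      have "take t [0..<n+1] = [0..<t]" using l by (simp del: upt_Suc add: take_upt)
      then have "qs = map (Q n i) [0..<t]" using q(3) unfolding t_def by simp
      then have "Q n i (t - 1) \<in> set qs" using t1 by auto
      then show "Q n i (t - 1) \<in> set ?prev" using s(3) by simp
      show "NP i t \<in> set ?prev" using L3_in[of t n i m] t1 i by simp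
      show "Pos (p i t) \<in> Q n i (t - 1)" using Q_has t1 by simp
      show "Neg (p i t) \<in> NP i t" by simp
      show "y = (Q n i (t - 1) - {Pos (p i t)}) \<union> (NP i t - {Neg (p i t)})"
        using yt Q_res[OF t1(1)] by simp
    qed
  qed
qed

definition Dfull :: "bvar clause list" where
  "Dfull = (((L1 m n @ L2 m n) @ L3 m n) @ L4 n) @ L5 m n"

lemma cost_proof_Dfull: "cost_proof (BPHP_blocks m n) (BPHP m n) (m - n) Dfull"
  unfolding cost_proof_def
proof (intro conjI exI)
  show "derivation (BPHP_blocks m n) (BPHP m n) Dfull" unfolding Dfull_def by (rule der5)
  let ?K = "b1 ` {n+1..m}"
  show "?K \<subseteq> BPHP_blocks m n" using mn unfolding BPHP_blocks_def by auto
  have "card ?K = card {n+1..m}" by (rule card_image) (simp add: inj_on_def)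
  then show "card ?K = m - n" by simp
  show "\<forall>b\<in>?K. {Pos b} \<in> set Dfull"
  proof
    fix b assume "b \<in> ?K"
    then obtain i where b: "b = b1 i" "n < i" "i \<le> m" by auto
    then have "Q n i n \<in> set (L5 m n)" by (intro L5_in) auto
    then show "{Pos b} \<in> set Dfull" unfolding Dfull_def using b Qn by simp
  qed
  show "\<forall>b\<in>BPHP_blocks m n - ?K. {Neg b} \<in> set Dfull"
  proof
    fix b assume b: "b \<in> BPHP_blocks m n - ?K"
    then consider i where "b = b1 i" "1 \<le> i" "i \<le> n" | i k j where "b = b3 i k j" "valid3 m n i k j"
      unfolding BPHP_blocks_def valid3_def by fastforce
    then show "{Neg b} \<in> set Dfull"
    proof cases
      case 1 then show ?thesis using L4_in[of i n] unfolding Dfull_def by simp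
    next
      case 2 then show ?thesis using L1_in[of m n i k j] unfolding Dfull_def by simp
    qed
  qed
qed

lemma len_Dfull: "length Dfull \<le> 10 * (m + n) ^ 3"
proof -
  let ?s = "m + n"
  have lt: "length (trips m n) \<le> m * (m * n)"
    unfolding trips_def
  proof (rule order_trans[OF len_concat_le[where c="m * n"]])
    show "\<forall>x\<in>set [1..<m+1]. length (concat (map (\<lambda>k. map (\<lambda>j. (x, k, j)) [1..<n+1]) [x+1..<m+1])) \<le> m * n"
    proof
      fix x assume "x \<in> set [1..<m+1]"
      show "length (concat (map (\<lambda>k. map (\<lambda>j. (x, k, j)) [1..<n+1]) [x+1..<m+1])) \<le> m * n"
        by (rule order_trans[OF len_concat_le[where c=n]]) auto
    qed
  qed simp
  have l1: "length (L1 m n) \<le> m * (m * n)" using lt unfolding L1_def by simp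
  have l2: "length (L2 m n) \<le> m * (m * n) * 2"
    unfolding L2_def by (rule order_trans[OF len_concat_le[where c=2]]) (use lt in auto)
  have l3: "length (L3 m n) \<le> n * m"
    unfolding L3_def by (rule order_trans[OF len_concat_le[where c=m]]) (auto simp: g3_def)
  have l4: "length (L4 n) \<le> n * (n + 2)"
  proof (unfold L4_def, rule order_trans[OF len_concat_le[where c="n+2"]])
    show "\<forall>x\<in>set [1..<n+1]. length (g4 n x) \<le> n + 2"
    proof
      fix x assume "x \<in> set [1..<n+1]"
      have "length (filter (\<lambda>h. h \<noteq> x) [1..<n+1]) \<le> length [1..<n+1]"
        by (rule length_filter_le)
      moreover have "length [1..<n+1] = n" by (simp del: upt_Suc)
      ultimately have "length (filter (\<lambda>h. h \<noteq> x) [1..<n+1]) \<le> n" by linarith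
      then show "length (g4 n x) \<le> n + 2" unfolding g4_def by simp
    qed
  qed simp
  have l5: "length (L5 m n) \<le> m * (n + 1)"
    unfolding L5_def by (rule order_trans[OF len_concat_le[where c="n+1"]]) auto
  have s1: "1 \<le> ?s" using mn by simp
  have a: "m * (m * n) \<le> ?s * ?s * ?s"
  proof -
    have "m * m \<le> ?s * ?s" by (intro mult_le_mono) auto
    then have "m * m * n \<le> ?s * ?s * ?s" by (intro mult_le_mono) auto
    then show ?thesis by (simp add: mult.assoc)
  qed
  have b: "n * m \<le> ?s * ?s * ?s"
  proof -
    have "n * m \<le> ?s * ?s" by (intro mult_le_mono) auto
    also have "\<dots> \<le> ?s * ?s * ?s" using s1 by simp
    finally show ?thesis .
  qed
  have ss: "?s * ?s \<le> ?s * ?s * ?s" using s1 by simp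
  have c: "n * (n + 2) \<le> 3 * (?s * ?s * ?s)"
  proof -
    have "n + 2 \<le> 3 * ?s" using s1 by simp
    then have "n * (n + 2) \<le> ?s * (3 * ?s)" by (intro mult_le_mono) auto
    also have "\<dots> = 3 * (?s * ?s)" by simp
    also have "\<dots> \<le> 3 * (?s * ?s * ?s)" using ss by simp
    finally show ?thesis .
  qed
  have d: "m * (n + 1) \<le> 2 * (?s * ?s * ?s)"
  proof -
    have "n + 1 \<le> 2 * ?s" using s1 by simp
    then have "m * (n + 1) \<le> ?s * (2 * ?s)" by (intro mult_le_mono) auto
    also have "\<dots> = 2 * (?s * ?s)" by simp
    also have "\<dots> \<le> 2 * (?s * ?s * ?s)" using ss by simp
    finally show ?thesis .
  qed
  have "length Dfull \<le> m * (m * n) + m * (m * n) * 2 + n * m + n * (n + 2) + m * (n + 1)"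
    unfolding Dfull_def length_append using l1 l2 l3 l4 l5 by linarith
  also have "\<dots> \<le> 10 * (?s * ?s * ?s)" using a b c d by linarith
  finally show ?thesis by (simp add: power3_eq_cube)
qed

end


theorem theorem6p3:
  shows "\<exists>c d :: nat. \<forall>m n :: nat. 1 \<le> n \<and> n < m \<longrightarrow>
           (\<exists>Ds. cost_proof (BPHP_blocks m n) (BPHP m n) (m - n) Ds \<and>
                 length Ds \<le> c * (m + n) ^ d)"
proof (rule exI[of _ 10], rule exI[of _ 3], intro allI impI)
  fix m n :: nat assume a: "1 \<le> n \<and> n < m"
  show "\<exists>Ds. cost_proof (BPHP_blocks m n) (BPHP m n) (m - n) Ds \<and> length Ds \<le> 10 * (m + n) ^ 3"
  proof -
    from a have h: "1 \<le> n" "n < m" by auto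
    show ?thesis by (rule exI[of _ "Dfull m n"]) (use cost_proof_Dfull[OF h] len_Dfull[OF h] in simp)
  qed
qed

end
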